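(* Fix a $C^0$-concept over a topologized field $\mathbb{K}$. Let $E,F\in\mathcal{M}$, $U\subseteq E$ open, $f\colon U\to F$ a map and $k\in\mathbb{N}_0\cup\{\infty\}$. If there is an open cover $(U_i)_{i\in I}$ of $U$ such that $f|_{U_i}\colon U_i\to F$ is of class $C^k$ for each $i\in I$, then $f$ is of class $C^k$.
   Context: Let $\mathbb{K}$ be a commutative ring with unit (here a field) carrying a topology. A $C^0$-concept over $\mathbb{K}$ consists of: (a) a class $\mathcal{M}$ of topologized $\mathbb{K}$-modules with $\mathbb{K}\in\mathcal{M}$; (b) for $E,F\in\mathcal{M}$ and open $U\subseteq E$, a set $C^0(U,F)$ of continuous maps; (c) for $E_1,E_2\in\mathcal{M}$ a topology on $E_1\times E_2$ (not necessarily the product topology) making it a member of $\mathcal{M}$; subject to: (I.1) composites of $C^0$-maps are $C^0$, identities and inclusions of open subsets are $C^0$; (I.2) $x\mapsto rx+b$ is $C^0$; (I.3) $t\mapsto tv+x$ is $C^0$; (I.4) $\mathbb{K}^\times$ is open and inversion is $C^0$; (I.5) a map whose restrictions to the members of an open cover of its domain are $C^0$ is $C^0$; (II.1) projections and $v\mapsto(v,y)$, $w\mapsto(x,w)$ are $C^0$; (II.2) $f_1\times f_2$ is $C^0$ for $C^0$-maps $f_i$; (II.3) diagonals are $C^0$; (II.4) exchange/associativity maps of products are $C^0$ both ways; (II.5) addition and scalar multiplication are $C^0$; (III) a $C^0$-map on open $U\subseteq\mathbb{K}$ is determined by its values on $U\cap\mathbb{K}^\times$. For open $V\subseteq X$,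 $V^{[1]}=\{(x,v,t)\in V\times X\times\mathbb{K}:x+tv\in V\}$; a $C^0$-map $g$ is $C^1$ if there is a $C^0$-map $g^{[1]}$ on $V^{[1]}$ with $g(x+tv)-g(x)=t\,g^{[1]}(x,v,t)$; recursively $g$ is $C^{k+1}$ if $C^k$ and $g^{[k]}$ is $C^1$, $g^{[k+1]}=(g^{[k]})^{[1]}$ on $V^{[k+1]}=(V^{[k]})^{[1]}$; $C^\infty$ = $C^k$ for all $k$. *)

theory Defs
  imports "HOL-Analysis.Analysis" "HOL-Library.Extended_Nat"
begin

record ('k, 'v) tmod =
  mcarrier :: "'v set"
  mzero :: 'v
  madd :: "'v \<Rightarrow> 'v \<Rightarrow> 'v"
  msmult :: "'k \<Rightarrow> 'v \<Rightarrow> 'v"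
  mtop :: "'v topology"

definition is_tmod :: "('k::field, 'v) tmod \<Rightarrow> bool" where
  "is_tmod E \<longleftrightarrow>
     mzero E \<in> mcarrier E \<and>
     (\<forall>x\<in>mcarrier E. \<forall>y\<in>mcarrier E. madd E x y \<in> mcarrier E) \<and>
     (\<forall>r. \<forall>x\<in>mcarrier E. msmult E r x \<in> mcarrier E) \<and>
     (\<forall>x\<in>mcarrier E. \<forall>y\<in>mcarrier E. \<forall>z\<in>mcarrier E.
        madd E (madd E x y) z = madd E x (madd E y z)) \<and>
     (\<forall>x\<in>mcarrier E. \<forall>y\<in>mcarrier E. madd E x y = madd E y x) \<and>
     (\<forall>x\<in>mcarrier E. madd E (mzero E) x = x) \<and>
     (\<forall>x\<in>mcarrier E. \<exists>y\<in>mcarrier E. madd E x y = mzero E) \<and>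
     (\<forall>r. \<forall>x\<in>mcarrier E. \<forall>y\<in>mcarrier E.
        msmult E r (madd E x y) = madd E (msmult E r x) (msmult E r y)) \<and>
     (\<forall>r s. \<forall>x\<in>mcarrier E. msmult E (r + s) x = madd E (msmult E r x) (msmult E s x)) \<and>
     (\<forall>r s. \<forall>x\<in>mcarrier E. msmult E (r * s) x = msmult E r (msmult E s x)) \<and>
     (\<forall>x\<in>mcarrier E. msmult E 1 x = x) \<and>
     topspace (mtop E) = mcarrier E"

definition mdiff :: "('k::field, 'v) tmod \<Rightarrow> 'v \<Rightarrow> 'v \<Rightarrow> 'v" where
  "mdiff E a b = madd E a (msmult E (-1) b)"

record ('k, 'v) c0data =
  cM :: "('k, 'v) tmod set"
  cK :: "('k, 'v) tmod"
  emb :: "'k \<Rightarrow> 'v"                 \<comment> \<open>embedding of scalars into the universe\<close>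
  pr :: "'v \<Rightarrow> 'v \<Rightarrow> 'v"              \<comment> \<open>pairing in the universe\<close>
  ptop :: "('k, 'v) tmod \<Rightarrow> ('k, 'v) tmod \<Rightarrow> 'v topology"
  cC0 :: "('k, 'v) tmod \<Rightarrow> 'v set \<Rightarrow> ('k, 'v) tmod \<Rightarrow> ('v \<Rightarrow> 'v) set"

definition kval :: "('k, 'v) c0data \<Rightarrow> 'v \<Rightarrow> 'k" where
  "kval S x = (THE t. x = emb S t)"

definition pfst :: "('k, 'v) c0data \<Rightarrow> 'v \<Rightarrow> 'v" where
  "pfst S z = (THE a. \<exists>b. z = pr S a b)"

definition psnd :: "('k, 'v) c0data \<Rightarrow> 'v \<Rightarrow> 'v" where
  "psnd S z = (THE b. \<exists>a. z = pr S a b)"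

definition prodM :: "('k, 'v) c0data \<Rightarrow> ('k, 'v) tmod \<Rightarrow> ('k, 'v) tmod \<Rightarrow> ('k, 'v) tmod" where
  "prodM S E1 E2 =
     \<lparr> mcarrier = (\<lambda>(a, b). pr S a b) ` (mcarrier E1 \<times> mcarrier E2),
       mzero = pr S (mzero E1) (mzero E2),
       madd = (\<lambda>z w. pr S (madd E1 (pfst S z) (pfst S w)) (madd E2 (psnd S z) (psnd S w))),
       msmult = (\<lambda>r z. pr S (msmult E1 r (pfst S z)) (msmult E2 r (psnd S z))),
       mtop = ptop S E1 E2 \<rparr>"

definition Kunits :: "('k::field, 'v) c0data \<Rightarrow> 'v set" where
  "Kunits S = emb S ` {t. t \<noteq> 0}"

definition C0_concept :: "('k::field, 'v) c0data \<Rightarrow> bool" where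
  "C0_concept S \<longleftrightarrow>
    \<comment> \<open>universe set-up: injective embedding and pairing\<close>
    inj (emb S) \<and> (\<forall>a b c d. pr S a b = pr S c d \<longrightarrow> a = c \<and> b = d) \<and>
    \<comment> \<open>(a) M consists of topologized K-modules and contains K\<close>
    (\<forall>E\<in>cM S. is_tmod E) \<and>
    cK S \<in> cM S \<and> mcarrier (cK S) = range (emb S) \<and>
    mzero (cK S) = emb S 0 \<and>
    (\<forall>a b. madd (cK S) (emb S a) (emb S b) = emb S (a + b)) \<and>
    (\<forall>r a. msmult (cK S) r (emb S a) = emb S (r * a)) \<and>
    \<comment> \<open>(c) products are members of M\<close>
    (\<forall>E1\<in>cM S. \<forall>E2\<in>cM S. prodM S E1 E2 \<in> cM S) \<and>
    \<comment> \<open>(b) C^0 maps are continuous maps U -> F (functions matter only on U)\<close>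
    (\<forall>E\<in>cM S. \<forall>F\<in>cM S. \<forall>U. openin (mtop E) U \<longrightarrow>
       (\<forall>f\<in>cC0 S E U F. continuous_map (subtopology (mtop E) U) (mtop F) f) \<and>
       (\<forall>f g. f \<in> cC0 S E U F \<and> (\<forall>x\<in>U. f x = g x) \<longrightarrow> g \<in> cC0 S E U F)) \<and>
    \<comment> \<open>(I.1)\<close>
    (\<forall>E\<in>cM S. \<forall>F\<in>cM S. \<forall>G\<in>cM S. \<forall>U V f g.
       openin (mtop E) U \<and> openin (mtop F) V \<and> f \<in> cC0 S E U F \<and> g \<in> cC0 S F V G \<and> f ` U \<subseteq> V
       \<longrightarrow> g \<circ> f \<in> cC0 S E U G) \<and>
    (\<forall>E\<in>cM S. \<forall>U. openin (mtop E) U \<longrightarrow> id \<in> cC0 S E U E) \<and>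
    \<comment> \<open>(I.2)\<close>
    (\<forall>E\<in>cM S. \<forall>r. \<forall>b\<in>mcarrier E.
       (\<lambda>x. madd E (msmult E r x) b) \<in> cC0 S E (mcarrier E) E) \<and>
    \<comment> \<open>(I.3)\<close>
    (\<forall>E\<in>cM S. \<forall>v\<in>mcarrier E. \<forall>x\<in>mcarrier E.
       (\<lambda>s. madd E (msmult E (kval S s) v) x) \<in> cC0 S (cK S) (mcarrier (cK S)) E) \<and>
    \<comment> \<open>(I.4)\<close>
    openin (mtop (cK S)) (Kunits S) \<and>
    (\<lambda>s. emb S (inverse (kval S s))) \<in> cC0 S (cK S) (Kunits S) (cK S) \<and>
    \<comment> \<open>(I.5)\<close>
    (\<forall>E\<in>cM S. \<forall>F\<in>cM S. \<forall>U f \<U>. openin (mtop E) U \<and> \<Union>\<U> = U \<and>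
       (\<forall>W\<in>\<U>. openin (mtop E) W \<and> f \<in> cC0 S E W F) \<longrightarrow> f \<in> cC0 S E U F) \<and>
    \<comment> \<open>(II.1)\<close>
    (\<forall>E1\<in>cM S. \<forall>E2\<in>cM S.
       pfst S \<in> cC0 S (prodM S E1 E2) (mcarrier (prodM S E1 E2)) E1 \<and>
       psnd S \<in> cC0 S (prodM S E1 E2) (mcarrier (prodM S E1 E2)) E2 \<and>
       (\<forall>y\<in>mcarrier E2. (\<lambda>v. pr S v y) \<in> cC0 S E1 (mcarrier E1) (prodM S E1 E2)) \<and>
       (\<forall>x\<in>mcarrier E1. (\<lambda>w. pr S x w) \<in> cC0 S E2 (mcarrier E2) (prodM S E1 E2))) \<and>
    \<comment> \<open>(II.2)\<close>
    (\<forall>E1\<in>cM S. \<forall>E2\<in>cM S. \<forall>F1\<in>cM S. \<forall>F2\<in>cM S. \<forall>U1 U2 f1 f2.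
       openin (mtop E1) U1 \<and> openin (mtop E2) U2 \<and> f1 \<in> cC0 S E1 U1 F1 \<and> f2 \<in> cC0 S E2 U2 F2
       \<longrightarrow> (\<lambda>z. pr S (f1 (pfst S z)) (f2 (psnd S z)))
             \<in> cC0 S (prodM S E1 E2) ((\<lambda>(a, b). pr S a b) ` (U1 \<times> U2)) (prodM S F1 F2)) \<and>
    \<comment> \<open>(II.3)\<close>
    (\<forall>E\<in>cM S. (\<lambda>x. pr S x x) \<in> cC0 S E (mcarrier E) (prodM S E E)) \<and>
    \<comment> \<open>(II.4)\<close>
    (\<forall>E1\<in>cM S. \<forall>E2\<in>cM S.
       (\<lambda>z. pr S (psnd S z) (pfst S z)) \<in> cC0 S (prodM S E1 E2) (mcarrier (prodM S E1 E2)) (prodM S E2 E1)) \<and>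
    (\<forall>E1\<in>cM S. \<forall>E2\<in>cM S. \<forall>E3\<in>cM S.
       (\<lambda>z. pr S (pfst S (pfst S z)) (pr S (psnd S (pfst S z)) (psnd S z)))
         \<in> cC0 S (prodM S (prodM S E1 E2) E3) (mcarrier (prodM S (prodM S E1 E2) E3))
               (prodM S E1 (prodM S E2 E3)) \<and>
       (\<lambda>z. pr S (pr S (pfst S z) (pfst S (psnd S z))) (psnd S (psnd S z)))
         \<in> cC0 S (prodM S E1 (prodM S E2 E3)) (mcarrier (prodM S E1 (prodM S E2 E3)))
               (prodM S (prodM S E1 E2) E3)) \<and>
    \<comment> \<open>(II.5)\<close>
    (\<forall>E\<in>cM S.
       (\<lambda>z. madd E (pfst S z) (psnd S z)) \<in> cC0 S (prodM S E E) (mcarrier (prodM S E E)) E \<and>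
       (\<lambda>z. msmult E (kval S (pfst S z)) (psnd S z))
         \<in> cC0 S (prodM S (cK S) E) (mcarrier (prodM S (cK S) E)) E) \<and>
    \<comment> \<open>(III)\<close>
    (\<forall>F\<in>cM S. \<forall>U f g. openin (mtop (cK S)) U \<and> f \<in> cC0 S (cK S) U F \<and> g \<in> cC0 S (cK S) U F \<and>
       (\<forall>x\<in>U \<inter> Kunits S. f x = g x) \<longrightarrow> (\<forall>x\<in>U. f x = g x))"

text \<open>Ambient space of V^[1]: X x (X x K), elements written pr x (pr v (emb t)).\<close>

definition amb1 :: "('k, 'v) c0data \<Rightarrow> ('k, 'v) tmod \<Rightarrow> ('k, 'v) tmod" where
  "amb1 S X = prodM S X (prodM S X (cK S))"

definition dom1 :: "('k, 'v) c0data \<Rightarrow> ('k, 'v) tmod \<Rightarrow> 'v set \<Rightarrow> 'v set" where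
  "dom1 S X V = {pr S x (pr S v (emb S t)) | x v t.
      x \<in> V \<and> v \<in> mcarrier X \<and> madd X x (msmult X t v) \<in> V}"

definition is_dq :: "('k::field, 'v) c0data \<Rightarrow> ('k, 'v) tmod \<Rightarrow> 'v set \<Rightarrow> ('k, 'v) tmod
                     \<Rightarrow> ('v \<Rightarrow> 'v) \<Rightarrow> ('v \<Rightarrow> 'v) \<Rightarrow> bool" where
  "is_dq S X V F g h \<longleftrightarrow> h \<in> cC0 S (amb1 S X) (dom1 S X V) F \<and>
     (\<forall>x v t. x \<in> V \<and> v \<in> mcarrier X \<and> madd X x (msmult X t v) \<in> V \<longrightarrow>
        mdiff F (g (madd X x (msmult X t v))) (g x) = msmult F t (h (pr S x (pr S v (emb S t)))))"

definition isC1 :: "('k::field, 'v) c0data \<Rightarrow> ('k, 'v) tmod \<Rightarrow> 'v set \<Rightarrow> ('k, 'v) tmod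
                     \<Rightarrow> ('v \<Rightarrow> 'v) \<Rightarrow> bool" where
  "isC1 S X V F g \<longleftrightarrow> g \<in> cC0 S X V F \<and> (\<exists>h. is_dq S X V F g h)"

text \<open>The map g^[1] (unique on V^[1] by axiom (III)).\<close>
definition dq :: "('k::field, 'v) c0data \<Rightarrow> ('k, 'v) tmod \<Rightarrow> 'v set \<Rightarrow> ('k, 'v) tmod
                     \<Rightarrow> ('v \<Rightarrow> 'v) \<Rightarrow> ('v \<Rightarrow> 'v)" where
  "dq S X V F g = (SOME h. is_dq S X V F g h)"

text \<open>Iterated data (X^[k] ambient, V^[k], g^[k]).\<close>
fun diter :: "('k::field, 'v) c0data \<Rightarrow> ('k, 'v) tmod \<Rightarrow> nat
              \<Rightarrow> ('k, 'v) tmod \<times> 'v set \<times> ('v \<Rightarrow> 'v) \<Rightarrow> ('k, 'v) tmod \<times> 'v set \<times> ('v \<Rightarrow> 'v)" where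
  "diter S F 0 p = p"
| "diter S F (Suc n) p =
     (case diter S F n p of (X', V', g') \<Rightarrow> (amb1 S X', dom1 S X' V', dq S X' V' F g'))"

fun isCk :: "('k::field, 'v) c0data \<Rightarrow> nat \<Rightarrow> ('k, 'v) tmod \<Rightarrow> 'v set \<Rightarrow> ('k, 'v) tmod
              \<Rightarrow> ('v \<Rightarrow> 'v) \<Rightarrow> bool" where
  "isCk S 0 X V F g \<longleftrightarrow> g \<in> cC0 S X V F"
| "isCk S (Suc k) X V F g \<longleftrightarrow> isCk S k X V F g \<and>
     (case diter S F k (X, V, g) of (X', V', g') \<Rightarrow> isC1 S X' V' F g')"

definition isCk_enat :: "('k::field, 'v) c0data \<Rightarrow> enat \<Rightarrow> ('k, 'v) tmod \<Rightarrow> 'v set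
              \<Rightarrow> ('k, 'v) tmod \<Rightarrow> ('v \<Rightarrow> 'v) \<Rightarrow> bool" where
  "isCk_enat S k X V F g \<longleftrightarrow>
     (case k of enat n \<Rightarrow> isCk S n X V F g | \<infinity> \<Rightarrow> (\<forall>n. isCk S n X V F g))"

end

theory Submission
  imports Defs
begin

locale tm = fixes E :: "('k::field, 'v) tmod" assumes tm: "is_tmod E"
begin
abbreviation "C \<equiv> mcarrier E"
lemma cz[simp]: "mzero E \<in> C" using tm unfolding is_tmod_def by auto
lemma cadd[simp]: "x \<in> C \<Longrightarrow> y \<in> C \<Longrightarrow> madd E x y \<in> C" using tm unfolding is_tmod_def by auto
lemma csm[simp]: "x \<in> C \<Longrightarrow> msmult E r x \<in> C" using tm unfolding is_tmod_def by auto
lemma assoc: "x \<in> C \<Longrightarrow> y \<in> C \<Longrightarrow> z \<in> C \<Longrightarrow> madd E (madd E x y) z = madd E x (madd E y z)"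
  using tm unfolding is_tmod_def by auto
lemma comm: "x \<in> C \<Longrightarrow> y \<in> C \<Longrightarrow> madd E x y = madd E y x"
  using tm unfolding is_tmod_def by auto
lemma zl[simp]: "x \<in> C \<Longrightarrow> madd E (mzero E) x = x" using tm unfolding is_tmod_def by auto
lemma inv: "x \<in> C \<Longrightarrow> \<exists>y\<in>C. madd E x y = mzero E" using tm unfolding is_tmod_def by blast
lemma sd1: "x \<in> C \<Longrightarrow> y \<in> C \<Longrightarrow> msmult E r (madd E x y) = madd E (msmult E r x) (msmult E r y)"
  using tm unfolding is_tmod_def by auto
lemma sd2: "x \<in> C \<Longrightarrow> msmult E (r + s) x = madd E (msmult E r x) (msmult E s x)"
  using tm unfolding is_tmod_def by auto
lemma sm: "x \<in> C \<Longrightarrow> msmult E (r * s) x = msmult E r (msmult E s x)"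
  using tm unfolding is_tmod_def by auto
lemma one[simp]: "x \<in> C \<Longrightarrow> msmult E 1 x = x" using tm unfolding is_tmod_def by auto
lemma top: "topspace (mtop E) = C" using tm unfolding is_tmod_def by auto

lemma zr[simp]: "x \<in> C \<Longrightarrow> madd E x (mzero E) = x" using comm zl cz by metis
lemma lcomm: "x \<in> C \<Longrightarrow> y \<in> C \<Longrightarrow> z \<in> C \<Longrightarrow> madd E x (madd E y z) = madd E y (madd E x z)"
  by (metis assoc comm)
lemma sm0[simp]: assumes "x \<in> C" shows "msmult E 0 x = mzero E"
proof -
  let ?a = "msmult E 0 x"
  have a: "?a \<in> C" using assms by simp
  have aa: "madd E ?a ?a = ?a" using sd2[OF assms, of 0 0] by simp
  obtain y where y: "y \<in> C" "madd E ?a y = mzero E" using inv[OF a] by blast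
  have "mzero E = madd E (madd E ?a ?a) y" using aa y by simp
  also have "\<dots> = ?a" using assoc[OF a a y(1)] y a by simp
  finally show ?thesis by simp
qed
lemma negr: "x \<in> C \<Longrightarrow> madd E x (msmult E (-1) x) = mzero E"
  using sd2[of x 1 "-1"] by simp
lemma negl: "x \<in> C \<Longrightarrow> madd E (msmult E (-1) x) x = mzero E"
  using negr comm by (metis csm)
lemma smz[simp]: "msmult E r (mzero E) = mzero E"
  using sm[of "mzero E" r 0] sm0[of "mzero E"] by simp
lemma mdiff_C[simp]: "x \<in> C \<Longrightarrow> y \<in> C \<Longrightarrow> mdiff E x y \<in> C" by (simp add: mdiff_def)
lemma mdiff_solve: assumes "y \<in> C" "a \<in> C" "mdiff E y a = b" shows "y = madd E a b"
proof -
  have "y = madd E y (madd E (msmult E (-1) a) a)" using assms negl by simp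
  also have "\<dots> = madd E b a" using assms assoc[of y "msmult E (-1) a" a] by (simp add: mdiff_def)
  finally show ?thesis using assms comm by (metis mdiff_C)
qed
lemma mdiff_add: assumes "a \<in> C" "b \<in> C" shows "mdiff E (madd E a b) a = b"
proof -
  have "mdiff E (madd E a b) a = madd E b (madd E a (msmult E (-1) a))"
    unfolding mdiff_def using assms by (metis assoc comm csm lcomm)
  thus ?thesis using assms negr by simp
qed
lemma sminv: "t \<noteq> 0 \<Longrightarrow> x \<in> C \<Longrightarrow> msmult E (inverse t) (msmult E t x) = x"
  using sm[of x "inverse t" t] by simp
lemma sminv2: "t \<noteq> 0 \<Longrightarrow> x \<in> C \<Longrightarrow> msmult E t (msmult E (inverse t) x) = x"
  using sm[of x t "inverse t"] by simp
lemma smcancel: "t \<noteq> 0 \<Longrightarrow> x \<in> C \<Longrightarrow> y \<in> C \<Longrightarrow> msmult E t x = msmult E t y \<Longrightarrow> x = y"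
  by (metis sminv)
end


locale c0c = fixes S :: "('k::field, 'v) c0data" assumes C0: "C0_concept S"
begin
lemmas ax1 = C0[unfolded C0_concept_def, THEN conjunct1]
lemmas ax2 = C0[unfolded C0_concept_def, THEN conjunct2, THEN conjunct1]
lemmas ax3 = C0[unfolded C0_concept_def, THEN conjunct2, THEN conjunct2, THEN conjunct1]
lemmas ax4 = C0[unfolded C0_concept_def, THEN conjunct2, THEN conjunct2, THEN conjunct2, THEN conjunct1]
lemmas ax5 = C0[unfolded C0_concept_def, THEN conjunct2, THEN conjunct2, THEN conjunct2, THEN conjunct2, THEN conjunct1]
lemmas ax6 = C0[unfolded C0_concept_def, THEN conjunct2, THEN conjunct2, THEN conjunct2, THEN conjunct2, THEN conjunct2, THEN conjunct1]
lemmas ax7 = C0[unfolded C0_concept_def, THEN conjunct2, THEN conjunct2, THEN conjunct2, THEN conjunct2, THEN conjunct2, THEN conjunct2, THEN conjunct1]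
lemmas ax8 = C0[unfolded C0_concept_def, THEN conjunct2, THEN conjunct2, THEN conjunct2, THEN conjunct2, THEN conjunct2, THEN conjunct2, THEN conjunct2, THEN conjunct1]
lemmas ax9 = C0[unfolded C0_concept_def, THEN conjunct2, THEN conjunct2, THEN conjunct2, THEN conjunct2, THEN conjunct2, THEN conjunct2, THEN conjunct2, THEN conjunct2, THEN conjunct1]
lemmas ax10 = C0[unfolded C0_concept_def, THEN conjunct2, THEN conjunct2, THEN conjunct2, THEN conjunct2, THEN conjunct2, THEN conjunct2, THEN conjunct2, THEN conjunct2, THEN conjunct2, THEN conjunct1]
lemmas ax11 = C0[unfolded C0_concept_def, THEN conjunct2, THEN conjunct2, THEN conjunct2, THEN conjunct2, THEN conjunct2, THEN conjunct2, THEN conjunct2, THEN conjunct2, THEN conjunct2, THEN conjunct2, THEN conjunct1]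
lemmas ax12 = C0[unfolded C0_concept_def, THEN conjunct2, THEN conjunct2, THEN conjunct2, THEN conjunct2, THEN conjunct2, THEN conjunct2, THEN conjunct2, THEN conjunct2, THEN conjunct2, THEN conjunct2, THEN conjunct2, THEN conjunct1]
lemmas ax13 = C0[unfolded C0_concept_def, THEN conjunct2, THEN conjunct2, THEN conjunct2, THEN conjunct2, THEN conjunct2, THEN conjunct2, THEN conjunct2, THEN conjunct2, THEN conjunct2, THEN conjunct2, THEN conjunct2, THEN conjunct2, THEN conjunct1]
lemmas ax14 = C0[unfolded C0_concept_def, THEN conjunct2, THEN conjunct2, THEN conjunct2, THEN conjunct2, THEN conjunct2, THEN conjunct2, THEN conjunct2, THEN conjunct2, THEN conjunct2, THEN conjunct2, THEN conjunct2, THEN conjunct2, THEN conjunct2, THEN conjunct1]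
lemmas ax15 = C0[unfolded C0_concept_def, THEN conjunct2, THEN conjunct2, THEN conjunct2, THEN conjunct2, THEN conjunct2, THEN conjunct2, THEN conjunct2, THEN conjunct2, THEN conjunct2, THEN conjunct2, THEN conjunct2, THEN conjunct2, THEN conjunct2, THEN conjunct2, THEN conjunct1]
lemmas ax16 = C0[unfolded C0_concept_def, THEN conjunct2, THEN conjunct2, THEN conjunct2, THEN conjunct2, THEN conjunct2, THEN conjunct2, THEN conjunct2, THEN conjunct2, THEN conjunct2, THEN conjunct2, THEN conjunct2, THEN conjunct2, THEN conjunct2, THEN conjunct2, THEN conjunct2, THEN conjunct1]
lemmas ax17 = C0[unfolded C0_concept_def, THEN conjunct2, THEN conjunct2, THEN conjunct2, THEN conjunct2, THEN conjunct2, THEN conjunct2, THEN conjunct2, THEN conjunct2, THEN conjunct2, THEN conjunct2, THEN conjunct2, THEN conjunct2, THEN conjunct2, THEN conjunct2, THEN conjunct2, THEN conjunct2, THEN conjunct1]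
lemmas ax18 = C0[unfolded C0_concept_def, THEN conjunct2, THEN conjunct2, THEN conjunct2, THEN conjunct2, THEN conjunct2, THEN conjunct2, THEN conjunct2, THEN conjunct2, THEN conjunct2, THEN conjunct2, THEN conjunct2, THEN conjunct2, THEN conjunct2, THEN conjunct2, THEN conjunct2, THEN conjunct2, THEN conjunct2, THEN conjunct1]
lemmas ax19 = C0[unfolded C0_concept_def, THEN conjunct2, THEN conjunct2, THEN conjunct2, THEN conjunct2, THEN conjunct2, THEN conjunct2, THEN conjunct2, THEN conjunct2, THEN conjunct2, THEN conjunct2, THEN conjunct2, THEN conjunct2, THEN conjunct2, THEN conjunct2, THEN conjunct2, THEN conjunct2, THEN conjunct2, THEN conjunct2, THEN conjunct1]
lemmas ax20 = C0[unfolded C0_concept_def, THEN conjunct2, THEN conjunct2, THEN conjunct2, THEN conjunct2, THEN conjunct2, THEN conjunct2, THEN conjunct2, THEN conjunct2, THEN conjunct2, THEN conjunct2, THEN conjunct2, THEN conjunct2, THEN conjunct2, THEN conjunct2, THEN conjunct2, THEN conjunct2, THEN conjunct2, THEN conjunct2, THEN conjunct2, THEN conjunct1]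
lemmas ax21 = C0[unfolded C0_concept_def, THEN conjunct2, THEN conjunct2, THEN conjunct2, THEN conjunct2, THEN conjunct2, THEN conjunct2, THEN conjunct2, THEN conjunct2, THEN conjunct2, THEN conjunct2, THEN conjunct2, THEN conjunct2, THEN conjunct2, THEN conjunct2, THEN conjunct2, THEN conjunct2, THEN conjunct2, THEN conjunct2, THEN conjunct2, THEN conjunct2, THEN conjunct1]
lemmas ax22 = C0[unfolded C0_concept_def, THEN conjunct2, THEN conjunct2, THEN conjunct2, THEN conjunct2, THEN conjunct2, THEN conjunct2, THEN conjunct2, THEN conjunct2, THEN conjunct2, THEN conjunct2, THEN conjunct2, THEN conjunct2, THEN conjunct2, THEN conjunct2, THEN conjunct2, THEN conjunct2, THEN conjunct2, THEN conjunct2, THEN conjunct2, THEN conjunct2, THEN conjunct2, THEN conjunct1]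
lemmas ax23 = C0[unfolded C0_concept_def, THEN conjunct2, THEN conjunct2, THEN conjunct2, THEN conjunct2, THEN conjunct2, THEN conjunct2, THEN conjunct2, THEN conjunct2, THEN conjunct2, THEN conjunct2, THEN conjunct2, THEN conjunct2, THEN conjunct2, THEN conjunct2, THEN conjunct2, THEN conjunct2, THEN conjunct2, THEN conjunct2, THEN conjunct2, THEN conjunct2, THEN conjunct2, THEN conjunct2, THEN conjunct1]
lemmas ax24 = C0[unfolded C0_concept_def, THEN conjunct2, THEN conjunct2, THEN conjunct2, THEN conjunct2, THEN conjunct2, THEN conjunct2, THEN conjunct2, THEN conjunct2, THEN conjunct2, THEN conjunct2, THEN conjunct2, THEN conjunct2, THEN conjunct2, THEN conjunct2, THEN conjunct2, THEN conjunct2, THEN conjunct2, THEN conjunct2, THEN conjunct2, THEN conjunct2, THEN conjunct2, THEN conjunct2, THEN conjunct2]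

lemma emb_inj[simp]: "emb S a = emb S b \<longleftrightarrow> a = b"
  using ax1 unfolding inj_def by blast
lemma pr_inj[simp]: "pr S a b = pr S c d \<longleftrightarrow> a = c \<and> b = d"
  using ax2 by blast
lemma kval_emb[simp]: "kval S (emb S a) = a"
  unfolding kval_def by (rule the_equality) auto
lemma pfst_pr[simp]: "pfst S (pr S a b) = a"
  unfolding pfst_def by (rule the_equality) auto
lemma psnd_pr[simp]: "psnd S (pr S a b) = b"
  unfolding psnd_def by (rule the_equality) auto
lemma pimg_iff: "z \<in> (\<lambda>(a, b). pr S a b) ` (A \<times> B) \<longleftrightarrow> (\<exists>a\<in>A. \<exists>b\<in>B. z = pr S a b)"
  by auto
lemma pr_pimg[simp]: "pr S a b \<in> (\<lambda>(a, b). pr S a b) ` (A \<times> B) \<longleftrightarrow> a \<in> A \<and> b \<in> B"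
  by auto

lemma tmodM: "E \<in> cM S \<Longrightarrow> is_tmod E" using ax3 by blast
lemma K_in[simp]: "cK S \<in> cM S" using ax4 by blast
lemma K_carrier: "mcarrier (cK S) = range (emb S)" using ax5 by blast
lemma K_emb[simp]: "emb S a \<in> mcarrier (cK S)" by (simp add: K_carrier)
lemma K_zero[simp]: "mzero (cK S) = emb S 0" using ax6 by blast
lemma K_add[simp]: "madd (cK S) (emb S a) (emb S b) = emb S (a + b)" using ax7 by blast
lemma K_sm[simp]: "msmult (cK S) r (emb S a) = emb S (r * a)" using ax8 by blast
lemma K_mdiff[simp]: "mdiff (cK S) (emb S a) (emb S b) = emb S (a - b)" by (simp add: mdiff_def)
lemma prodM_in[simp]: "E1 \<in> cM S \<Longrightarrow> E2 \<in> cM S \<Longrightarrow> prodM S E1 E2 \<in> cM S"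
  using ax9 by blast
lemma amb1_in[simp]: "X \<in> cM S \<Longrightarrow> amb1 S X \<in> cM S" by (simp add: amb1_def)

lemma prodM_carrier: "mcarrier (prodM S E1 E2) = (\<lambda>(a, b). pr S a b) ` (mcarrier E1 \<times> mcarrier E2)"
  by (simp add: prodM_def)
lemma pr_carrier[simp]: "pr S a b \<in> mcarrier (prodM S E1 E2) \<longleftrightarrow> a \<in> mcarrier E1 \<and> b \<in> mcarrier E2"
  by (simp add: prodM_def)
lemma prodM_carrierE: "z \<in> mcarrier (prodM S E1 E2) \<Longrightarrow> (\<And>a b. z = pr S a b \<Longrightarrow> a \<in> mcarrier E1 \<Longrightarrow> b \<in> mcarrier E2 \<Longrightarrow> P) \<Longrightarrow> P"
  by (auto simp: prodM_def)
lemma prodM_add[simp]: "madd (prodM S E1 E2) (pr S a b) (pr S c d) = pr S (madd E1 a c) (madd E2 b d)"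
  by (simp add: prodM_def)
lemma prodM_sm[simp]: "msmult (prodM S E1 E2) r (pr S a b) = pr S (msmult E1 r a) (msmult E2 r b)"
  by (simp add: prodM_def)
lemma prodM_zero[simp]: "mzero (prodM S E1 E2) = pr S (mzero E1) (mzero E2)"
  by (simp add: prodM_def)
lemma prodM_mdiff[simp]: "mdiff (prodM S E1 E2) (pr S a b) (pr S c d) = pr S (mdiff E1 a c) (mdiff E2 b d)"
  by (simp add: mdiff_def)
lemma pfst_carrier: "z \<in> mcarrier (prodM S E1 E2) \<Longrightarrow> pfst S z \<in> mcarrier E1"
  by (erule prodM_carrierE) simp
lemma psnd_carrier: "z \<in> mcarrier (prodM S E1 E2) \<Longrightarrow> psnd S z \<in> mcarrier E2"
  by (erule prodM_carrierE) simp

lemma cM_zero[simp]: "E \<in> cM S \<Longrightarrow> mzero E \<in> mcarrier E" using tm.cz[OF tm.intro[OF tmodM]] by blast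
lemma cM_add[simp]: "E \<in> cM S \<Longrightarrow> x \<in> mcarrier E \<Longrightarrow> y \<in> mcarrier E \<Longrightarrow> madd E x y \<in> mcarrier E"
  using tm.cadd[OF tm.intro[OF tmodM]] by blast
lemma cM_sm[simp]: "E \<in> cM S \<Longrightarrow> x \<in> mcarrier E \<Longrightarrow> msmult E r x \<in> mcarrier E"
  using tm.csm[OF tm.intro[OF tmodM]] by blast
lemma cM_mdiff[simp]: "E \<in> cM S \<Longrightarrow> x \<in> mcarrier E \<Longrightarrow> y \<in> mcarrier E \<Longrightarrow> mdiff E x y \<in> mcarrier E"
  using tm.mdiff_C[OF tm.intro[OF tmodM]] by blast
lemma cM_top[simp]: "E \<in> cM S \<Longrightarrow> topspace (mtop E) = mcarrier E"
  using tm.top[OF tm.intro[OF tmodM]] by blast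

lemma open_sub: "E \<in> cM S \<Longrightarrow> openin (mtop E) U \<Longrightarrow> U \<subseteq> mcarrier E"
  using openin_subset by force
lemma carrier_open[simp]: "E \<in> cM S \<Longrightarrow> openin (mtop E) (mcarrier E)"
  by (metis cM_top openin_topspace)

lemma C0_cont: "E \<in> cM S \<Longrightarrow> F \<in> cM S \<Longrightarrow> openin (mtop E) U \<Longrightarrow> f \<in> cC0 S E U F
   \<Longrightarrow> continuous_map (subtopology (mtop E) U) (mtop F) f"
  using ax10 by blast
lemma C0_cong: "E \<in> cM S \<Longrightarrow> F \<in> cM S \<Longrightarrow> openin (mtop E) U \<Longrightarrow> f \<in> cC0 S E U F
   \<Longrightarrow> (\<And>x. x \<in> U \<Longrightarrow> f x = g x) \<Longrightarrow> g \<in> cC0 S E U F"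
  using ax10 by blast
lemma C0_comp: "E \<in> cM S \<Longrightarrow> F \<in> cM S \<Longrightarrow> G \<in> cM S \<Longrightarrow> openin (mtop E) U \<Longrightarrow> openin (mtop F) V
   \<Longrightarrow> f \<in> cC0 S E U F \<Longrightarrow> g \<in> cC0 S F V G \<Longrightarrow> f ` U \<subseteq> V \<Longrightarrow> g \<circ> f \<in> cC0 S E U G"
  using ax11 by blast
lemma C0_id: "E \<in> cM S \<Longrightarrow> openin (mtop E) U \<Longrightarrow> id \<in> cC0 S E U E"
  using ax12 by blast
lemma C0_aff: "E \<in> cM S \<Longrightarrow> b \<in> mcarrier E \<Longrightarrow> (\<lambda>x. madd E (msmult E r x) b) \<in> cC0 S E (mcarrier E) E"
  using ax13 by blast
lemma C0_line: "E \<in> cM S \<Longrightarrow> v \<in> mcarrier E \<Longrightarrow> x \<in> mcarrier E \<Longrightarrow>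
  (\<lambda>s. madd E (msmult E (kval S s) v) x) \<in> cC0 S (cK S) (mcarrier (cK S)) E"
  using ax14 by blast
lemma Kunits_open: "openin (mtop (cK S)) (Kunits S)"
  using ax15 by blast
lemma C0_inv: "(\<lambda>s. emb S (inverse (kval S s))) \<in> cC0 S (cK S) (Kunits S) (cK S)"
  using ax16 by blast
lemma C0_glue: "E \<in> cM S \<Longrightarrow> F \<in> cM S \<Longrightarrow> openin (mtop E) U \<Longrightarrow> \<Union>\<U> = U \<Longrightarrow>
  (\<And>W. W \<in> \<U> \<Longrightarrow> openin (mtop E) W \<and> f \<in> cC0 S E W F) \<Longrightarrow> f \<in> cC0 S E U F"
  using ax17 by blast
lemma C0_pfst: "E1 \<in> cM S \<Longrightarrow> E2 \<in> cM S \<Longrightarrow> pfst S \<in> cC0 S (prodM S E1 E2) (mcarrier (prodM S E1 E2)) E1"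
  using ax18 by blast
lemma C0_psnd: "E1 \<in> cM S \<Longrightarrow> E2 \<in> cM S \<Longrightarrow> psnd S \<in> cC0 S (prodM S E1 E2) (mcarrier (prodM S E1 E2)) E2"
  using ax18 by blast
lemma C0_inr: "E1 \<in> cM S \<Longrightarrow> E2 \<in> cM S \<Longrightarrow> x \<in> mcarrier E1 \<Longrightarrow> (\<lambda>w. pr S x w) \<in> cC0 S E2 (mcarrier E2) (prodM S E1 E2)"
  using ax18 by blast
lemma C0_prodmap: "E1 \<in> cM S \<Longrightarrow> E2 \<in> cM S \<Longrightarrow> F1 \<in> cM S \<Longrightarrow> F2 \<in> cM S \<Longrightarrow>
  openin (mtop E1) U1 \<Longrightarrow> openin (mtop E2) U2 \<Longrightarrow> f1 \<in> cC0 S E1 U1 F1 \<Longrightarrow> f2 \<in> cC0 S E2 U2 F2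
  \<Longrightarrow> (\<lambda>z. pr S (f1 (pfst S z)) (f2 (psnd S z))) \<in> cC0 S (prodM S E1 E2) ((\<lambda>(a, b). pr S a b) ` (U1 \<times> U2)) (prodM S F1 F2)"
  using ax19 by blast
lemma C0_diag: "E \<in> cM S \<Longrightarrow> (\<lambda>x. pr S x x) \<in> cC0 S E (mcarrier E) (prodM S E E)"
  using ax20 by blast
lemma C0_add: "E \<in> cM S \<Longrightarrow> (\<lambda>z. madd E (pfst S z) (psnd S z)) \<in> cC0 S (prodM S E E) (mcarrier (prodM S E E)) E"
  using ax23 by blast
lemma C0_msm: "E \<in> cM S \<Longrightarrow> (\<lambda>z. msmult E (kval S (pfst S z)) (psnd S z)) \<in> cC0 S (prodM S (cK S) E) (mcarrier (prodM S (cK S) E)) E"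
  using ax23 by blast
lemma ax_III: "F \<in> cM S \<Longrightarrow> openin (mtop (cK S)) U \<Longrightarrow> f \<in> cC0 S (cK S) U F \<Longrightarrow> g \<in> cC0 S (cK S) U F \<Longrightarrow>
  (\<And>x. x \<in> U \<inter> Kunits S \<Longrightarrow> f x = g x) \<Longrightarrow> x \<in> U \<Longrightarrow> f x = g x"
  using ax24 by blast

lemma C0_img: "E \<in> cM S \<Longrightarrow> F \<in> cM S \<Longrightarrow> openin (mtop E) U \<Longrightarrow> f \<in> cC0 S E U F \<Longrightarrow> x \<in> U \<Longrightarrow> f x \<in> mcarrier F"
proof -
  assume a: "E \<in> cM S" "F \<in> cM S" "openin (mtop E) U" "f \<in> cC0 S E U F" "x \<in> U"
  have "f ` (topspace (subtopology (mtop E) U)) \<subseteq> topspace (mtop F)"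
    by (rule continuous_map_image_subset_topspace[OF C0_cont[OF a(1-4)]])
  moreover have "x \<in> topspace (subtopology (mtop E) U)" using a open_sub[OF a(1,3)] by auto
  ultimately show ?thesis using a by auto
qed

lemma C0_restrict: "E \<in> cM S \<Longrightarrow> F \<in> cM S \<Longrightarrow> openin (mtop E) U \<Longrightarrow> openin (mtop E) W \<Longrightarrow> W \<subseteq> U
  \<Longrightarrow> f \<in> cC0 S E U F \<Longrightarrow> f \<in> cC0 S E W F"
proof -
  assume a: "E \<in> cM S" "F \<in> cM S" "openin (mtop E) U" "openin (mtop E) W" "W \<subseteq> U" "f \<in> cC0 S E U F"
  have "f \<circ> id \<in> cC0 S E W F"
    by (rule C0_comp[of E E F W U id f]) (use a C0_id[OF a(1,4)] in auto)
  thus ?thesis by simp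
qed

lemma C0_comp': "E \<in> cM S \<Longrightarrow> F \<in> cM S \<Longrightarrow> G \<in> cM S \<Longrightarrow> openin (mtop E) U \<Longrightarrow> openin (mtop F) V
   \<Longrightarrow> f \<in> cC0 S E U F \<Longrightarrow> g \<in> cC0 S F V G \<Longrightarrow> (\<And>x. x \<in> U \<Longrightarrow> f x \<in> V) \<Longrightarrow> (\<lambda>x. g (f x)) \<in> cC0 S E U G"
proof -
  assume a: "E \<in> cM S" "F \<in> cM S" "G \<in> cM S" "openin (mtop E) U" "openin (mtop F) V"
   "f \<in> cC0 S E U F" "g \<in> cC0 S F V G" "\<And>x. x \<in> U \<Longrightarrow> f x \<in> V"
  have "g \<circ> f \<in> cC0 S E U G"
    by (rule C0_comp[of E F G U V f g]) (use a in auto)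
  thus ?thesis by (simp add: o_def)
qed

lemma C0_preimage: assumes "E \<in> cM S" "F \<in> cM S" "openin (mtop E) U" "f \<in> cC0 S E U F" "openin (mtop F) W"
  shows "openin (mtop E) {x \<in> U. f x \<in> W}"
proof -
  have c: "continuous_map (subtopology (mtop E) U) (mtop F) f" using C0_cont assms by blast
  have "openin (subtopology (mtop E) U) {x \<in> topspace (subtopology (mtop E) U). f x \<in> W}"
    using c assms(5) unfolding continuous_map_def by blast
  moreover have "{x \<in> topspace (subtopology (mtop E) U). f x \<in> W} = {x \<in> U. f x \<in> W}"
    using open_sub[OF assms(1,3)] assms(1) by auto
  ultimately have "openin (subtopology (mtop E) U) {x \<in> U. f x \<in> W}" by simp
  thus ?thesis using openin_open_subtopology[OF assms(3)] by blast
qed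

lemma prod_open: assumes "E1 \<in> cM S" "E2 \<in> cM S" "openin (mtop E1) U1" "openin (mtop E2) U2"
  shows "openin (mtop (prodM S E1 E2)) ((\<lambda>(a, b). pr S a b) ` (U1 \<times> U2))"
proof -
  let ?P = "prodM S E1 E2"
  have "openin (mtop ?P) {z \<in> mcarrier ?P. pfst S z \<in> U1}"
    by (rule C0_preimage[OF _ assms(1) _ C0_pfst assms(3)]) (use assms in auto)
  moreover have "openin (mtop ?P) {z \<in> mcarrier ?P. psnd S z \<in> U2}"
    by (rule C0_preimage[OF _ assms(2) _ C0_psnd assms(4)]) (use assms in auto)
  ultimately have "openin (mtop ?P) ({z \<in> mcarrier ?P. pfst S z \<in> U1} \<inter> {z \<in> mcarrier ?P. psnd S z \<in> U2})"
    by blast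
  moreover have "{z \<in> mcarrier ?P. pfst S z \<in> U1} \<inter> {z \<in> mcarrier ?P. psnd S z \<in> U2} = (\<lambda>(a, b). pr S a b) ` (U1 \<times> U2)"
    using open_sub[OF assms(1,3)] open_sub[OF assms(2,4)]
  proof (intro equalityI subsetI)
    fix z assume "z \<in> {z \<in> mcarrier ?P. pfst S z \<in> U1} \<inter> {z \<in> mcarrier ?P. psnd S z \<in> U2}"
    then obtain a b where "z = pr S a b" "a \<in> U1" "b \<in> U2" by (auto elim!: prodM_carrierE)
    thus "z \<in> (\<lambda>(a, b). pr S a b) ` (U1 \<times> U2)" by simp
  next
    fix z assume "z \<in> (\<lambda>(a, b). pr S a b) ` (U1 \<times> U2)"
    then obtain a b where "z = pr S a b" "a \<in> U1" "b \<in> U2" by auto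
    thus "z \<in> {z \<in> mcarrier ?P. pfst S z \<in> U1} \<inter> {z \<in> mcarrier ?P. psnd S z \<in> U2}"
      using open_sub[OF assms(1,3)] open_sub[OF assms(2,4)] by auto
  qed
  ultimately show ?thesis by simp
qed

lemma C0_pair: assumes "E \<in> cM S" "Y1 \<in> cM S" "Y2 \<in> cM S" "openin (mtop E) V"
  "f1 \<in> cC0 S E V Y1" "f2 \<in> cC0 S E V Y2"
  shows "(\<lambda>x. pr S (f1 x) (f2 x)) \<in> cC0 S E V (prodM S Y1 Y2)"
proof -
  have d: "(\<lambda>x. pr S x x) \<in> cC0 S E V (prodM S E E)"
    by (rule C0_restrict[OF assms(1) prodM_in[OF assms(1,1)] carrier_open[OF assms(1)] assms(4) open_sub[OF assms(1,4)] C0_diag[OF assms(1)]])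
  have p: "(\<lambda>z. pr S (f1 (pfst S z)) (f2 (psnd S z))) \<in> cC0 S (prodM S E E) ((\<lambda>(a, b). pr S a b) ` (V \<times> V)) (prodM S Y1 Y2)"
    by (rule C0_prodmap) (use assms in auto)
  have "(\<lambda>z. pr S (f1 (pfst S z)) (f2 (psnd S z))) \<circ> (\<lambda>x. pr S x x) \<in> cC0 S E V (prodM S Y1 Y2)"
    by (rule C0_comp[OF assms(1) prodM_in[OF assms(1,1)] prodM_in[OF assms(2,3)] assms(4) prod_open[OF assms(1,1,4,4)] d p]) auto
  thus ?thesis by (simp add: o_def)
qed

end

fun Ck :: "('k::field, 'v) c0data \<Rightarrow> nat \<Rightarrow> ('k, 'v) tmod \<Rightarrow> 'v set \<Rightarrow> ('k, 'v) tmod \<Rightarrow> ('v \<Rightarrow> 'v) \<Rightarrow> bool" where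
  "Ck S 0 X V F g = (g \<in> cC0 S X V F)"
| "Ck S (Suc k) X V F g = (g \<in> cC0 S X V F \<and> (\<exists>h. is_dq S X V F g h \<and> Ck S k (amb1 S X) (dom1 S X V) F h))"

definition mmap :: "('k::field, 'v) c0data \<Rightarrow> ('k, 'v) tmod \<Rightarrow> 'v \<Rightarrow> 'v" where
  "mmap S X z = msmult X (kval S (pfst S z)) (psnd S z)"
definition addm :: "('k::field, 'v) c0data \<Rightarrow> ('k, 'v) tmod \<Rightarrow> 'v \<Rightarrow> 'v" where
  "addm S X z = madd X (pfst S z) (psnd S z)"
definition subm :: "('k::field, 'v) c0data \<Rightarrow> ('k, 'v) tmod \<Rightarrow> 'v \<Rightarrow> 'v" where
  "subm S X z = madd X (pfst S z) (msmult X (-1) (psnd S z))"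
definition Amap :: "('k::field, 'v) c0data \<Rightarrow> ('k, 'v) tmod \<Rightarrow> 'v \<Rightarrow> 'v" where
  "Amap S X z = madd X (pfst S z) (msmult X (kval S (psnd S (psnd S z))) (pfst S (psnd S z)))"
definition invm :: "('k::field, 'v) c0data \<Rightarrow> 'v \<Rightarrow> 'v" where
  "invm S s = emb S (inverse (kval S s))"

context c0c begin

lemma Ck_C0: "Ck S k X V F g \<Longrightarrow> g \<in> cC0 S X V F" by (cases k) auto

lemma Ck_mono: "Ck S (Suc k) X V F g \<Longrightarrow> Ck S k X V F g"
proof (induction k arbitrary: X V g)
  case 0 thus ?case by simp
next
  case (Suc k) thus ?case by (meson Ck.simps(2))
qed

lemma dom1_iff[simp]: "pr S x (pr S v (emb S t)) \<in> dom1 S X V \<longleftrightarrow> x \<in> V \<and> v \<in> mcarrier X \<and> madd X x (msmult X t v) \<in> V"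
  unfolding dom1_def by auto
lemma dom1E: "z \<in> dom1 S X V \<Longrightarrow> (\<And>x v t. z = pr S x (pr S v (emb S t)) \<Longrightarrow> x \<in> V \<Longrightarrow> v \<in> mcarrier X \<Longrightarrow> madd X x (msmult X t v) \<in> V \<Longrightarrow> P) \<Longrightarrow> P"
  unfolding dom1_def by auto
lemma dom1_mono: "W \<subseteq> V \<Longrightarrow> dom1 S X W \<subseteq> dom1 S X V"
  by (auto elim!: dom1E)
lemma dom1_Int: "dom1 S X V1 \<inter> dom1 S X V2 = dom1 S X (V1 \<inter> V2)"
  by (auto elim!: dom1E)
lemma amb1_carrier: "z \<in> mcarrier (amb1 S X) \<longleftrightarrow> (\<exists>x v t. z = pr S x (pr S v (emb S t)) \<and> x \<in> mcarrier X \<and> v \<in> mcarrier X)"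
  unfolding amb1_def by (auto elim!: prodM_carrierE simp: K_carrier)
lemma dom1_sub: "X \<in> cM S \<Longrightarrow> openin (mtop X) V \<Longrightarrow> dom1 S X V \<subseteq> mcarrier (amb1 S X)"
  using open_sub by (fastforce elim!: dom1E simp: amb1_carrier)
lemma dom1_carrier: "X \<in> cM S \<Longrightarrow> dom1 S X (mcarrier X) = mcarrier (amb1 S X)"
  by (auto elim!: dom1E simp: amb1_carrier)

lemma C0_compc: "E \<in> cM S \<Longrightarrow> F \<in> cM S \<Longrightarrow> G \<in> cM S \<Longrightarrow> openin (mtop E) U
   \<Longrightarrow> f \<in> cC0 S E U F \<Longrightarrow> g \<in> cC0 S F (mcarrier F) G \<Longrightarrow> (\<lambda>x. g (f x)) \<in> cC0 S E U G"
  by (rule C0_comp'[of E F G U "mcarrier F" f g]) (auto intro: C0_img)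

lemma C0_Amap: assumes X: "X \<in> cM S" shows "Amap S X \<in> cC0 S (amb1 S X) (mcarrier (amb1 S X)) X"
proof -
  let ?A = "amb1 S X" and ?K = "cK S"
  have A: "?A \<in> cM S" using X by simp
  have XK: "prodM S X ?K \<in> cM S" using X by simp
  have o: "openin (mtop ?A) (mcarrier ?A)" using A by simp
  have p1: "pfst S \<in> cC0 S ?A (mcarrier ?A) X" unfolding amb1_def using C0_pfst X XK by blast
  have p2: "psnd S \<in> cC0 S ?A (mcarrier ?A) (prodM S X ?K)" unfolding amb1_def using C0_psnd X XK by blast
  have T: "(\<lambda>z. psnd S (psnd S z)) \<in> cC0 S ?A (mcarrier ?A) ?K"
    by (rule C0_compc[OF A XK K_in o p2 C0_psnd[OF X K_in]])
  have Pi: "(\<lambda>z. pfst S (psnd S z)) \<in> cC0 S ?A (mcarrier ?A) X"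
    by (rule C0_compc[OF A XK X o p2 C0_pfst[OF X K_in]])
  have q: "(\<lambda>z. pr S (psnd S (psnd S z)) (pfst S (psnd S z))) \<in> cC0 S ?A (mcarrier ?A) (prodM S ?K X)"
    by (rule C0_pair[OF A K_in X o T Pi])
  have m: "(\<lambda>z. mmap S X (pr S (psnd S (psnd S z)) (pfst S (psnd S z)))) \<in> cC0 S ?A (mcarrier ?A) X"
    by (rule C0_compc[OF A _ X o q]) (use X C0_msm[OF X] in \<open>simp_all add: mmap_def[abs_def]\<close>)
  have q2: "(\<lambda>z. pr S (pfst S z) (mmap S X (pr S (psnd S (psnd S z)) (pfst S (psnd S z))))) \<in> cC0 S ?A (mcarrier ?A) (prodM S X X)"
    by (rule C0_pair[OF A X X o p1 m])
  have "(\<lambda>z. addm S X (pr S (pfst S z) (mmap S X (pr S (psnd S (psnd S z)) (pfst S (psnd S z)))))) \<in> cC0 S ?A (mcarrier ?A) X"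
    by (rule C0_compc[OF A _ X o q2]) (use X C0_add[OF X] in \<open>simp_all add: addm_def[abs_def]\<close>)
  thus ?thesis by (simp add: addm_def mmap_def Amap_def[abs_def])
qed

lemma Amap_pr[simp]: "Amap S X (pr S x (pr S v (emb S t))) = madd X x (msmult X t v)"
  by (simp add: Amap_def)

lemma dom1_open: assumes X: "X \<in> cM S" and V: "openin (mtop X) V"
  shows "openin (mtop (amb1 S X)) (dom1 S X V)"
proof -
  let ?A = "amb1 S X" and ?K = "cK S"
  have A: "?A \<in> cM S" using X by simp
  have XK: "prodM S X ?K \<in> cM S" using X by simp
  have o: "openin (mtop ?A) (mcarrier ?A)" using A by simp
  have p1: "pfst S \<in> cC0 S ?A (mcarrier ?A) X" unfolding amb1_def using C0_pfst X XK by blast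
  have "openin (mtop ?A) ({z \<in> mcarrier ?A. pfst S z \<in> V} \<inter> {z \<in> mcarrier ?A. Amap S X z \<in> V})"
    using C0_preimage[OF A X o p1 V] C0_preimage[OF A X o C0_Amap[OF X] V] by blast
  moreover have "{z \<in> mcarrier ?A. pfst S z \<in> V} \<inter> {z \<in> mcarrier ?A. Amap S X z \<in> V} = dom1 S X V"
    using dom1_sub[OF X V] open_sub[OF X V] by (auto simp: amb1_carrier elim!: dom1E)
  ultimately show ?thesis by simp
qed

lemma is_dqD: "is_dq S X V F g h \<Longrightarrow> x \<in> V \<Longrightarrow> v \<in> mcarrier X \<Longrightarrow> madd X x (msmult X t v) \<in> V \<Longrightarrow>
   mdiff F (g (madd X x (msmult X t v))) (g x) = msmult F t (h (pr S x (pr S v (emb S t))))"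
  unfolding is_dq_def by blast
lemma is_dq_C0: "is_dq S X V F g h \<Longrightarrow> h \<in> cC0 S (amb1 S X) (dom1 S X V) F"
  unfolding is_dq_def by blast

lemma is_dq_restrict: assumes X: "X \<in> cM S" and F: "F \<in> cM S" and V: "openin (mtop X) V"
  and W: "openin (mtop X) W" "W \<subseteq> V" and d: "is_dq S X V F g h"
  shows "is_dq S X W F g h"
  unfolding is_dq_def
proof (intro conjI allI impI)
  show "h \<in> cC0 S (amb1 S X) (dom1 S X W) F"
    by (rule C0_restrict[OF amb1_in[OF X] F dom1_open[OF X V] dom1_open[OF X W(1)] dom1_mono[OF W(2)] is_dq_C0[OF d]])
next
  fix x v t assume "x \<in> W \<and> v \<in> mcarrier X \<and> madd X x (msmult X t v) \<in> W"
  thus "mdiff F (g (madd X x (msmult X t v))) (g x) = msmult F t (h (pr S x (pr S v (emb S t))))"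
    using is_dqD[OF d] W by blast
qed


lemma Kunits_iff: "s \<in> Kunits S \<longleftrightarrow> (\<exists>t. t \<noteq> 0 \<and> s = emb S t)"
  unfolding Kunits_def by auto
lemma emb_Kunits[simp]: "emb S t \<in> Kunits S \<longleftrightarrow> t \<noteq> 0"
  unfolding Kunits_def by auto

lemma dq_unique: assumes X: "X \<in> cM S" and F: "F \<in> cM S" and V: "openin (mtop X) V"
  and d1: "is_dq S X V F g h1" and d2: "is_dq S X V F g h2" and z: "z \<in> dom1 S X V"
  shows "h1 z = h2 z"
proof -
  let ?A = "amb1 S X" and ?K = "cK S"
  obtain x v t where zz: "z = pr S x (pr S v (emb S t))" and x: "x \<in> V" and v: "v \<in> mcarrier X"
    and xv: "madd X x (msmult X t v) \<in> V" using z by (auto elim!: dom1E)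
  have xc: "x \<in> mcarrier X" using x open_sub[OF X V] by auto
  define W where "W = {s \<in> mcarrier ?K. madd X (msmult X (kval S s) v) x \<in> V}"
  have oK: "openin (mtop ?K) (mcarrier ?K)" by simp
  have W: "openin (mtop ?K) W" unfolding W_def
    by (rule C0_preimage[OF K_in X oK C0_line[OF X v xc] V])
  have XK: "prodM S X ?K \<in> cM S" using X by simp
  have j0: "(\<lambda>s. pr S v s) \<in> cC0 S ?K (mcarrier ?K) (prodM S X ?K)"
    using C0_inr[OF X K_in v] by simp
  have j1: "(\<lambda>w. pr S x w) \<in> cC0 S (prodM S X ?K) (mcarrier (prodM S X ?K)) ?A"
    using C0_inr[OF X XK xc] by (simp add: amb1_def)
  have j: "(\<lambda>s. pr S x (pr S v s)) \<in> cC0 S ?K (mcarrier ?K) ?A"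
    by (rule C0_compc[OF K_in XK amb1_in[OF X] oK j0 j1])
  have Wsub: "W \<subseteq> mcarrier ?K" unfolding W_def by auto
  have jW: "(\<lambda>s. pr S x (pr S v s)) \<in> cC0 S ?K W ?A"
    by (rule C0_restrict[OF K_in amb1_in[OF X] oK W Wsub j])
  have comm: "\<And>a. madd X (msmult X a v) x = madd X x (msmult X a v)"
    by (rule tm.comm[OF tm.intro[OF tmodM[OF X]] cM_sm[OF X v] xc])
  have img: "\<And>s. s \<in> W \<Longrightarrow> pr S x (pr S v s) \<in> dom1 S X V"
    unfolding W_def using x v comm by (auto simp: K_carrier)
  have f1: "(\<lambda>s. h1 (pr S x (pr S v s))) \<in> cC0 S ?K W F"
    by (rule C0_comp'[OF K_in amb1_in[OF X] F W dom1_open[OF X V] jW is_dq_C0[OF d1] img])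
  have f2: "(\<lambda>s. h2 (pr S x (pr S v s))) \<in> cC0 S ?K W F"
    by (rule C0_comp'[OF K_in amb1_in[OF X] F W dom1_open[OF X V] jW is_dq_C0[OF d2] img])
  have eqU: "h1 (pr S x (pr S v s)) = h2 (pr S x (pr S v s))" if s: "s \<in> W \<inter> Kunits S" for s
  proof -
    obtain a where a: "a \<noteq> 0" "s = emb S a" using s by (auto simp: Kunits_iff)
    have sd: "pr S x (pr S v (emb S a)) \<in> dom1 S X V" using img[of s] s a(2) by blast
    hence xa: "madd X x (msmult X a v) \<in> V" by simp
    have "msmult F a (h1 (pr S x (pr S v (emb S a)))) = msmult F a (h2 (pr S x (pr S v (emb S a))))"
      using is_dqD[OF d1 x v xa] is_dqD[OF d2 x v xa] by simp
    moreover have "h1 (pr S x (pr S v (emb S a))) \<in> mcarrier F"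
      by (rule C0_img[OF amb1_in[OF X] F dom1_open[OF X V] is_dq_C0[OF d1] sd])
    moreover have "h2 (pr S x (pr S v (emb S a))) \<in> mcarrier F"
      by (rule C0_img[OF amb1_in[OF X] F dom1_open[OF X V] is_dq_C0[OF d2] sd])
    ultimately show ?thesis using tm.smcancel[OF tm.intro[OF tmodM[OF F]] a(1)] a(2) by blast
  qed
  have tW: "emb S t \<in> W" unfolding W_def using xv comm by simp
  show ?thesis using ax_III[OF F W f1 f2 eqU tW] zz by simp
qed

lemma Ck_cong: "X \<in> cM S \<Longrightarrow> F \<in> cM S \<Longrightarrow> openin (mtop X) V \<Longrightarrow> Ck S k X V F g \<Longrightarrow> (\<And>x. x \<in> V \<Longrightarrow> g x = g' x) \<Longrightarrow> Ck S k X V F g'"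
proof (induction k arbitrary: X V g g')
  case 0 thus ?case using C0_cong by simp
next
  case (Suc k)
  from Suc.prems(4) obtain h where g: "g \<in> cC0 S X V F" and h: "is_dq S X V F g h" "Ck S k (amb1 S X) (dom1 S X V) F h" by auto
  have "g' \<in> cC0 S X V F" using C0_cong[OF Suc.prems(1-3) g] Suc.prems(5) by blast
  moreover have "is_dq S X V F g' h" using h(1) Suc.prems(5) unfolding is_dq_def by auto
  ultimately show ?case using h(2) by auto
qed

lemma Ck_restrict: "X \<in> cM S \<Longrightarrow> F \<in> cM S \<Longrightarrow> openin (mtop X) V \<Longrightarrow> openin (mtop X) W \<Longrightarrow> W \<subseteq> V \<Longrightarrow> Ck S k X V F g \<Longrightarrow> Ck S k X W F g"
proof (induction k arbitrary: X V W g)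
  case 0 thus ?case using C0_restrict by simp
next
  case (Suc k)
  from Suc.prems(6) obtain h where g: "g \<in> cC0 S X V F" and h: "is_dq S X V F g h" "Ck S k (amb1 S X) (dom1 S X V) F h" by auto
  have "g \<in> cC0 S X W F" using C0_restrict[OF Suc.prems(1,2,3,4,5) g] .
  moreover have "is_dq S X W F g h" using is_dq_restrict[OF Suc.prems(1-5) h(1)] .
  moreover have "Ck S k (amb1 S X) (dom1 S X W) F h"
    by (rule Suc.IH[OF amb1_in[OF Suc.prems(1)] Suc.prems(2) dom1_open[OF Suc.prems(1,3)] dom1_open[OF Suc.prems(1,4)] dom1_mono[OF Suc.prems(5)] h(2)])
  ultimately show ?case by auto
qed


definition lin :: "('k::field, 'v) tmod \<Rightarrow> ('k, 'v) tmod \<Rightarrow> ('v \<Rightarrow> 'v) \<Rightarrow> bool" where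
  "lin X Y L \<longleftrightarrow> (\<forall>x\<in>mcarrier X. L x \<in> mcarrier Y) \<and>
     (\<forall>x\<in>mcarrier X. \<forall>v\<in>mcarrier X. \<forall>t. L (madd X x (msmult X t v)) = madd Y (L x) (msmult Y t (L v)))"

lemma amb1_lin_eq: "madd (amb1 S X) (pr S x (pr S v (emb S t))) (msmult (amb1 S X) s (pr S x' (pr S v' (emb S t'))))
   = pr S (madd X x (msmult X s x')) (pr S (madd X v (msmult X s v')) (emb S (t + s * t')))"
  by (simp add: amb1_def)

lemma lin_pi: "X \<in> cM S \<Longrightarrow> lin (amb1 S X) X (\<lambda>z. pfst S (psnd S z))"
  unfolding lin_def by (auto simp: amb1_carrier amb1_lin_eq)
lemma lin_T: "X \<in> cM S \<Longrightarrow> lin (amb1 S X) (cK S) (\<lambda>z. psnd S (psnd S z))"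
  unfolding lin_def by (auto simp: amb1_carrier amb1_lin_eq)
lemma lin_pfst1: "X \<in> cM S \<Longrightarrow> lin (amb1 S X) X (pfst S)"
  unfolding lin_def by (auto simp: amb1_carrier amb1_lin_eq)

lemma C0_pi: assumes X: "X \<in> cM S" shows "(\<lambda>z. pfst S (psnd S z)) \<in> cC0 S (amb1 S X) (mcarrier (amb1 S X)) X"
proof -
  have p2: "psnd S \<in> cC0 S (amb1 S X) (mcarrier (amb1 S X)) (prodM S X (cK S))" unfolding amb1_def using C0_psnd X by simp
  show ?thesis by (rule C0_compc[OF amb1_in[OF X] _ X _ p2 C0_pfst]) (use X in auto)
qed
lemma C0_T: assumes X: "X \<in> cM S" shows "(\<lambda>z. psnd S (psnd S z)) \<in> cC0 S (amb1 S X) (mcarrier (amb1 S X)) (cK S)"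
proof -
  have p2: "psnd S \<in> cC0 S (amb1 S X) (mcarrier (amb1 S X)) (prodM S X (cK S))" unfolding amb1_def using C0_psnd X by simp
  show ?thesis by (rule C0_compc[OF amb1_in[OF X] _ K_in _ p2 C0_psnd]) (use X in auto)
qed
lemma C0_pfst1: assumes X: "X \<in> cM S" shows "pfst S \<in> cC0 S (amb1 S X) (mcarrier (amb1 S X)) X"
  unfolding amb1_def using C0_pfst X by simp

lemma Ck_lin: "X \<in> cM S \<Longrightarrow> Y \<in> cM S \<Longrightarrow> lin X Y L \<Longrightarrow> L \<in> cC0 S X (mcarrier X) Y \<Longrightarrow> openin (mtop X) V \<Longrightarrow> Ck S k X V Y L"
proof (induction k arbitrary: X V L)
  case 0 thus ?case using C0_restrict[OF 0(1,2) carrier_open[OF 0(1)] 0(5) open_sub[OF 0(1,5)] 0(4)] by simp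
next
  case (Suc k)
  note X = Suc.prems(1) and Y = Suc.prems(2) and l = Suc.prems(3) and c = Suc.prems(4) and V = Suc.prems(5)
  interpret Ym: tm Y using tmodM[OF Y] by (rule tm.intro)
  let ?h = "\<lambda>z. L (pfst S (psnd S z))"
  have LV: "L \<in> cC0 S X V Y" using C0_restrict[OF X Y carrier_open[OF X] V open_sub[OF X V] c] .
  have hl: "lin (amb1 S X) Y ?h"
    using l unfolding lin_def by (auto simp: amb1_carrier amb1_lin_eq)
  have hc: "?h \<in> cC0 S (amb1 S X) (mcarrier (amb1 S X)) Y"
    by (rule C0_compc[OF amb1_in[OF X] X Y carrier_open[OF amb1_in[OF X]] C0_pi[OF X] c])
  have hd: "?h \<in> cC0 S (amb1 S X) (dom1 S X V) Y"
    by (rule C0_restrict[OF amb1_in[OF X] Y carrier_open[OF amb1_in[OF X]] dom1_open[OF X V] dom1_sub[OF X V] hc])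
  have dq: "is_dq S X V Y L ?h"
    unfolding is_dq_def
  proof (intro conjI hd allI impI)
    fix x v t assume a: "x \<in> V \<and> v \<in> mcarrier X \<and> madd X x (msmult X t v) \<in> V"
    hence xc: "x \<in> mcarrier X" using open_sub[OF X V] by auto
    have "L (madd X x (msmult X t v)) = madd Y (L x) (msmult Y t (L v))" using l a xc unfolding lin_def by blast
    moreover have "L x \<in> mcarrier Y" "L v \<in> mcarrier Y" using l a xc unfolding lin_def by auto
    ultimately show "mdiff Y (L (madd X x (msmult X t v))) (L x) = msmult Y t (?h (pr S x (pr S v (emb S t))))"
      using Ym.mdiff_add by simp
  qed
  have "Ck S k (amb1 S X) (dom1 S X V) Y ?h"
    by (rule Suc.IH[OF amb1_in[OF X] Y hl hc dom1_open[OF X V]])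
  thus ?case using LV dq by auto
qed

lemma Ck_pair: "X \<in> cM S \<Longrightarrow> Y1 \<in> cM S \<Longrightarrow> Y2 \<in> cM S \<Longrightarrow> openin (mtop X) V \<Longrightarrow>
  Ck S k X V Y1 f1 \<Longrightarrow> Ck S k X V Y2 f2 \<Longrightarrow> Ck S k X V (prodM S Y1 Y2) (\<lambda>x. pr S (f1 x) (f2 x))"
proof (induction k arbitrary: X V f1 f2)
  case 0 thus ?case using C0_pair by simp
next
  case (Suc k)
  note X = Suc.prems(1) and Y1 = Suc.prems(2) and Y2 = Suc.prems(3) and V = Suc.prems(4)
  obtain h1 where 1: "f1 \<in> cC0 S X V Y1" "is_dq S X V Y1 f1 h1" "Ck S k (amb1 S X) (dom1 S X V) Y1 h1" using Suc.prems(5) by auto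
  obtain h2 where 2: "f2 \<in> cC0 S X V Y2" "is_dq S X V Y2 f2 h2" "Ck S k (amb1 S X) (dom1 S X V) Y2 h2" using Suc.prems(6) by auto
  have ck: "Ck S k (amb1 S X) (dom1 S X V) (prodM S Y1 Y2) (\<lambda>z. pr S (h1 z) (h2 z))"
    by (rule Suc.IH[OF amb1_in[OF X] Y1 Y2 dom1_open[OF X V] 1(3) 2(3)])
  have dq: "is_dq S X V (prodM S Y1 Y2) (\<lambda>x. pr S (f1 x) (f2 x)) (\<lambda>z. pr S (h1 z) (h2 z))"
    unfolding is_dq_def
  proof (intro conjI allI impI)
    show "(\<lambda>z. pr S (h1 z) (h2 z)) \<in> cC0 S (amb1 S X) (dom1 S X V) (prodM S Y1 Y2)" using Ck_C0[OF ck] .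
  next
    fix x v t assume a: "x \<in> V \<and> v \<in> mcarrier X \<and> madd X x (msmult X t v) \<in> V"
    thus "mdiff (prodM S Y1 Y2) (pr S (f1 (madd X x (msmult X t v))) (f2 (madd X x (msmult X t v)))) (pr S (f1 x) (f2 x)) =
          msmult (prodM S Y1 Y2) t (pr S (h1 (pr S x (pr S v (emb S t)))) (h2 (pr S x (pr S v (emb S t)))))"
      using is_dqD[OF 1(2)] is_dqD[OF 2(2)] by simp
  qed
  show ?case using C0_pair[OF X Y1 Y2 V 1(1) 2(1)] dq ck by auto
qed

lemma Ck_img: "X \<in> cM S \<Longrightarrow> F \<in> cM S \<Longrightarrow> openin (mtop X) V \<Longrightarrow> Ck S k X V F g \<Longrightarrow> x \<in> V \<Longrightarrow> g x \<in> mcarrier F"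
  using C0_img Ck_C0 by blast

lemma Ck_chain: "X \<in> cM S \<Longrightarrow> Y \<in> cM S \<Longrightarrow> F \<in> cM S \<Longrightarrow> openin (mtop X) V \<Longrightarrow> openin (mtop Y) W \<Longrightarrow>
  Ck S k X V Y \<phi> \<Longrightarrow> Ck S k Y W F g \<Longrightarrow> (\<And>x. x \<in> V \<Longrightarrow> \<phi> x \<in> W) \<Longrightarrow> Ck S k X V F (\<lambda>x. g (\<phi> x))"
proof (induction k arbitrary: X V Y W F \<phi> g)
  case 0 thus ?case using C0_comp' by simp
next
  case (Suc k)
  note X = Suc.prems(1) and Y = Suc.prems(2) and F = Suc.prems(3) and V = Suc.prems(4) and W = Suc.prems(5)
    and img = Suc.prems(8)
  interpret Ym: tm Y using tmodM[OF Y] by (rule tm.intro)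
  interpret Fm: tm F using tmodM[OF F] by (rule tm.intro)
  obtain hp where p: "\<phi> \<in> cC0 S X V Y" "is_dq S X V Y \<phi> hp" "Ck S k (amb1 S X) (dom1 S X V) Y hp" using Suc.prems(6) by auto
  obtain hg where g: "g \<in> cC0 S Y W F" "is_dq S Y W F g hg" "Ck S k (amb1 S Y) (dom1 S Y W) F hg" using Suc.prems(7) by auto
  let ?A = "amb1 S X" and ?D = "dom1 S X V"
  have A: "?A \<in> cM S" using X by simp
  have D: "openin (mtop ?A) ?D" using dom1_open[OF X V] .
  have pf: "Ck S k ?A ?D X (pfst S)"
    by (rule Ck_lin[OF A X lin_pfst1[OF X] C0_pfst1[OF X] D])
  have pfi: "\<And>z. z \<in> ?D \<Longrightarrow> pfst S z \<in> V" by (auto elim!: dom1E)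
  have c1: "Ck S k ?A ?D Y (\<lambda>z. \<phi> (pfst S z))"
    by (rule Suc.IH[OF A X Y D V pf Ck_mono[OF Suc.prems(6)] pfi])
  have T: "Ck S k ?A ?D (cK S) (\<lambda>z. psnd S (psnd S z))"
    by (rule Ck_lin[OF A K_in lin_T[OF X] C0_T[OF X] D])
  have c2: "Ck S k ?A ?D (prodM S Y (cK S)) (\<lambda>z. pr S (hp z) (psnd S (psnd S z)))"
    by (rule Ck_pair[OF A Y K_in D p(3) T])
  have c3: "Ck S k ?A ?D (amb1 S Y) (\<lambda>z. pr S (\<phi> (pfst S z)) (pr S (hp z) (psnd S (psnd S z))))"
    unfolding amb1_def[of S Y] by (rule Ck_pair[OF A Y _ D c1 c2]) (use Y in simp)
  have hpc: "\<And>z. z \<in> ?D \<Longrightarrow> hp z \<in> mcarrier Y"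
    using Ck_img[OF A Y D p(3)] by blast
  have pc: "\<And>x. x \<in> V \<Longrightarrow> \<phi> x \<in> mcarrier Y" using Ck_img[OF X Y V Suc.prems(6)] by blast
  have key: "\<phi> (madd X x (msmult X t v)) = madd Y (\<phi> x) (msmult Y t (hp (pr S x (pr S v (emb S t)))))"
    if a: "x \<in> V" "v \<in> mcarrier X" "madd X x (msmult X t v) \<in> V" for x v t
    by (rule Ym.mdiff_solve[OF pc[OF a(3)] pc[OF a(1)] is_dqD[OF p(2) a]])
  have Di: "\<And>z. z \<in> ?D \<Longrightarrow> pr S (\<phi> (pfst S z)) (pr S (hp z) (psnd S (psnd S z))) \<in> dom1 S Y W"
  proof -
    fix z assume z: "z \<in> ?D"
    then obtain x v t where zz: "z = pr S x (pr S v (emb S t))" and a: "x \<in> V" "v \<in> mcarrier X" "madd X x (msmult X t v) \<in> V"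
      by (auto elim!: dom1E)
    show "pr S (\<phi> (pfst S z)) (pr S (hp z) (psnd S (psnd S z))) \<in> dom1 S Y W"
      using img[OF a(1)] hpc[OF z] key[OF a] img[OF a(3)] zz by simp
  qed
  have ck: "Ck S k ?A ?D F (\<lambda>z. hg (pr S (\<phi> (pfst S z)) (pr S (hp z) (psnd S (psnd S z)))))"
    by (rule Suc.IH[OF A amb1_in[OF Y] F D dom1_open[OF Y W] c3 g(3) Di])
  have dq: "is_dq S X V F (\<lambda>x. g (\<phi> x)) (\<lambda>z. hg (pr S (\<phi> (pfst S z)) (pr S (hp z) (psnd S (psnd S z)))))"
    unfolding is_dq_def
  proof (intro conjI allI impI)
    show "(\<lambda>z. hg (pr S (\<phi> (pfst S z)) (pr S (hp z) (psnd S (psnd S z))))) \<in> cC0 S ?A ?D F" using Ck_C0[OF ck] .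
  next
    fix x v t assume "x \<in> V \<and> v \<in> mcarrier X \<and> madd X x (msmult X t v) \<in> V"
    hence a: "x \<in> V" "v \<in> mcarrier X" "madd X x (msmult X t v) \<in> V" by auto
    have "z \<in> ?D" if "z = pr S x (pr S v (emb S t))" for z using a that by simp
    hence hz: "hp (pr S x (pr S v (emb S t))) \<in> mcarrier Y" using hpc by blast
    have e: "madd Y (\<phi> x) (msmult Y t (hp (pr S x (pr S v (emb S t))))) \<in> W" using key[OF a] img[OF a(3)] by simp
    show "mdiff F (g (\<phi> (madd X x (msmult X t v)))) (g (\<phi> x)) =
         msmult F t (hg (pr S (\<phi> (pfst S (pr S x (pr S v (emb S t))))) (pr S (hp (pr S x (pr S v (emb S t)))) (psnd S (psnd S (pr S x (pr S v (emb S t))))))))"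
      using is_dqD[OF g(2) img[OF a(1)] hz e] key[OF a] by simp
  qed
  have "(\<lambda>x. g (\<phi> x)) \<in> cC0 S X V F" by (rule C0_comp'[OF X Y F V W p(1) g(1) img])
  thus ?case using dq ck by auto
qed

end

context tm begin
lemma alg_m: "y \<in> C \<Longrightarrow> \<eta> \<in> C \<Longrightarrow> msmult E (\<alpha> + s*\<beta>) (madd E y (msmult E s \<eta>)) =
   madd E (msmult E \<alpha> y) (msmult E s (madd E (msmult E \<alpha> \<eta>) (msmult E \<beta> (madd E y (msmult E s \<eta>)))))"
  by (simp add: sd1 sd2 sm[symmetric] assoc comm lcomm mult_ac distrib_left distrib_right)
end

context c0c begin

lemma lin_pfst: "lin (prodM S E1 E2) E1 (pfst S)"
  unfolding lin_def by (auto elim!: prodM_carrierE)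
lemma lin_psnd: "lin (prodM S E1 E2) E2 (psnd S)"
  unfolding lin_def by (auto elim!: prodM_carrierE)

lemmas malg = tm.assoc tm.comm tm.lcomm tm.sd1 tm.sd2 tm.sm[symmetric] tm.csm tm.cadd

lemma lin_addm: assumes E: "E \<in> cM S" shows "lin (prodM S E E) E (addm S E)"
proof -
  interpret Em: tm E using tmodM[OF E] by (rule tm.intro)
  show ?thesis unfolding lin_def addm_def
    by (auto elim!: prodM_carrierE simp: Em.assoc Em.comm Em.lcomm Em.sd1)
qed
lemma lin_subm: assumes E: "E \<in> cM S" shows "lin (prodM S E E) E (subm S E)"
proof -
  interpret Em: tm E using tmodM[OF E] by (rule tm.intro)
  show ?thesis unfolding lin_def subm_def
    by (auto elim!: prodM_carrierE simp: Em.assoc Em.comm Em.lcomm Em.sd1 Em.sm[symmetric] mult.commute)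
qed
lemma lin_neg: assumes E: "E \<in> cM S" shows "lin E E (\<lambda>x. msmult E (-1) x)"
proof -
  interpret Em: tm E using tmodM[OF E] by (rule tm.intro)
  show ?thesis unfolding lin_def
    by (auto simp: Em.sd1 Em.sm[symmetric] mult.commute)
qed

lemma C0_neg: assumes E: "E \<in> cM S" shows "(\<lambda>x. msmult E (-1) x) \<in> cC0 S E (mcarrier E) E"
proof -
  interpret Em: tm E using tmodM[OF E] by (rule tm.intro)
  show ?thesis by (rule C0_cong[OF E E carrier_open[OF E] C0_aff[OF E Em.cz, of "-1"]]) simp
qed
lemma C0_addm: "E \<in> cM S \<Longrightarrow> addm S E \<in> cC0 S (prodM S E E) (mcarrier (prodM S E E)) E"
  using C0_add by (simp add: addm_def[abs_def])
lemma C0_subm: assumes E: "E \<in> cM S" shows "subm S E \<in> cC0 S (prodM S E E) (mcarrier (prodM S E E)) E"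
proof -
  let ?P = "prodM S E E"
  have P: "?P \<in> cM S" using E by simp
  have n: "(\<lambda>z. msmult E (-1) (psnd S z)) \<in> cC0 S ?P (mcarrier ?P) E"
    by (rule C0_compc[OF P E E carrier_open[OF P] C0_psnd[OF E E] C0_neg[OF E]])
  have q: "(\<lambda>z. pr S (pfst S z) (msmult E (-1) (psnd S z))) \<in> cC0 S ?P (mcarrier ?P) ?P"
    by (rule C0_pair[OF P E E carrier_open[OF P] C0_pfst[OF E E] n])
  have "(\<lambda>z. addm S E (pr S (pfst S z) (msmult E (-1) (psnd S z)))) \<in> cC0 S ?P (mcarrier ?P) E"
    by (rule C0_compc[OF P P E carrier_open[OF P] q C0_addm[OF E]])
  thus ?thesis by (simp add: addm_def subm_def[abs_def])
qed

lemma Ck_pfst: "E1 \<in> cM S \<Longrightarrow> E2 \<in> cM S \<Longrightarrow> openin (mtop (prodM S E1 E2)) V \<Longrightarrow> Ck S k (prodM S E1 E2) V E1 (pfst S)"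
  by (rule Ck_lin[OF _ _ lin_pfst C0_pfst]) auto
lemma Ck_psnd: "E1 \<in> cM S \<Longrightarrow> E2 \<in> cM S \<Longrightarrow> openin (mtop (prodM S E1 E2)) V \<Longrightarrow> Ck S k (prodM S E1 E2) V E2 (psnd S)"
  by (rule Ck_lin[OF _ _ lin_psnd C0_psnd]) auto
lemma Ck_addm: "E \<in> cM S \<Longrightarrow> openin (mtop (prodM S E E)) V \<Longrightarrow> Ck S k (prodM S E E) V E (addm S E)"
  by (rule Ck_lin[OF _ _ lin_addm C0_addm]) auto
lemma Ck_subm: "E \<in> cM S \<Longrightarrow> openin (mtop (prodM S E E)) V \<Longrightarrow> Ck S k (prodM S E E) V E (subm S E)"
  by (rule Ck_lin[OF _ _ lin_subm C0_subm]) auto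
lemma Ck_neg: "E \<in> cM S \<Longrightarrow> openin (mtop E) V \<Longrightarrow> Ck S k E V E (\<lambda>x. msmult E (-1) x)"
  by (rule Ck_lin[OF _ _ lin_neg C0_neg]) auto

lemma Ck_chainc: "X \<in> cM S \<Longrightarrow> Y \<in> cM S \<Longrightarrow> F \<in> cM S \<Longrightarrow> openin (mtop X) V \<Longrightarrow>
  Ck S k X V Y \<phi> \<Longrightarrow> Ck S k Y (mcarrier Y) F g \<Longrightarrow> Ck S k X V F (\<lambda>x. g (\<phi> x))"
  by (rule Ck_chain[of X Y F V "mcarrier Y"]) (auto intro: Ck_img)

lemma Ck_pfst': "X \<in> cM S \<Longrightarrow> E1 \<in> cM S \<Longrightarrow> E2 \<in> cM S \<Longrightarrow> openin (mtop X) V \<Longrightarrow>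
  Ck S k X V (prodM S E1 E2) \<phi> \<Longrightarrow> Ck S k X V E1 (\<lambda>x. pfst S (\<phi> x))"
  by (rule Ck_chainc[OF _ prodM_in]) (auto intro: Ck_pfst)
lemma Ck_psnd': "X \<in> cM S \<Longrightarrow> E1 \<in> cM S \<Longrightarrow> E2 \<in> cM S \<Longrightarrow> openin (mtop X) V \<Longrightarrow>
  Ck S k X V (prodM S E1 E2) \<phi> \<Longrightarrow> Ck S k X V E2 (\<lambda>x. psnd S (\<phi> x))"
  by (rule Ck_chainc[OF _ prodM_in]) (auto intro: Ck_psnd)

lemma Ck_id: "X \<in> cM S \<Longrightarrow> openin (mtop X) V \<Longrightarrow> Ck S k X V X (\<lambda>x. x)"
proof -
  assume X: "X \<in> cM S" and V: "openin (mtop X) V"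
  have "lin X X (\<lambda>x. x)" unfolding lin_def by auto
  moreover have "(\<lambda>x. x) \<in> cC0 S X (mcarrier X) X" using C0_id[OF X carrier_open[OF X]] by (simp add: id_def)
  ultimately show ?thesis using Ck_lin[OF X X _ _ V] by blast
qed

lemma Ck_Amap: assumes X: "X \<in> cM S" and m: "\<And>V. openin (mtop (prodM S (cK S) X)) V \<Longrightarrow> Ck S k (prodM S (cK S) X) V X (mmap S X)"
  and W: "openin (mtop (amb1 S X)) W"
  shows "Ck S k (amb1 S X) W X (Amap S X)"
proof -
  let ?A = "amb1 S X"
  have A: "?A \<in> cM S" using X by simp
  have XK: "prodM S X (cK S) \<in> cM S" using X by simp
  have z: "Ck S k ?A W ?A (\<lambda>z. z)" by (rule Ck_id[OF A W])
  have p1: "Ck S k ?A W X (\<lambda>z. pfst S z)" using Ck_pfst'[OF A X XK W] z unfolding amb1_def by simp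
  have p2: "Ck S k ?A W (prodM S X (cK S)) (\<lambda>z. psnd S z)" using Ck_psnd'[OF A X XK W] z unfolding amb1_def by simp
  have T: "Ck S k ?A W (cK S) (\<lambda>z. psnd S (psnd S z))" by (rule Ck_psnd'[OF A X K_in W p2])
  have Pi: "Ck S k ?A W X (\<lambda>z. pfst S (psnd S z))" by (rule Ck_pfst'[OF A X K_in W p2])
  have q: "Ck S k ?A W (prodM S (cK S) X) (\<lambda>z. pr S (psnd S (psnd S z)) (pfst S (psnd S z)))"
    by (rule Ck_pair[OF A K_in X W T Pi])
  have mq: "Ck S k ?A W X (\<lambda>z. mmap S X (pr S (psnd S (psnd S z)) (pfst S (psnd S z))))"
    by (rule Ck_chainc[OF A _ X W q m]) (use X in auto)
  have q2: "Ck S k ?A W (prodM S X X) (\<lambda>z. pr S (pfst S z) (mmap S X (pr S (psnd S (psnd S z)) (pfst S (psnd S z)))))"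
    by (rule Ck_pair[OF A X X W p1 mq])
  have "Ck S k ?A W X (\<lambda>z. addm S X (pr S (pfst S z) (mmap S X (pr S (psnd S (psnd S z)) (pfst S (psnd S z))))))"
    by (rule Ck_chainc[OF A _ X W q2 Ck_addm]) (use X in auto)
  moreover have "(\<lambda>z. addm S X (pr S (pfst S z) (mmap S X (pr S (psnd S (psnd S z)) (pfst S (psnd S z)))))) = Amap S X"
    by (rule ext) (simp add: addm_def mmap_def Amap_def)
  ultimately show ?thesis by simp
qed


lemma Ck_mmap: "F \<in> cM S \<Longrightarrow> openin (mtop (prodM S (cK S) F)) V \<Longrightarrow> Ck S k (prodM S (cK S) F) V F (mmap S F)"
proof (induction k arbitrary: V)
  case 0 thus ?case
    using C0_restrict[OF prodM_in[OF K_in 0(1)] 0(1) carrier_open[OF prodM_in[OF K_in 0(1)]] 0(2) open_sub[OF _ 0(2)] C0_msm[OF 0(1)]]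
    by (simp add: mmap_def[abs_def])
next
  case (Suc k)
  note F = Suc.prems(1) and V = Suc.prems(2)
  interpret Fm: tm F using tmodM[OF F] by (rule tm.intro)
  let ?K = "cK S"
  let ?P = "prodM S ?K F"
  let ?A = "amb1 S ?P" and ?D = "dom1 S ?P V"
  have P: "?P \<in> cM S" using F by simp
  have A: "?A \<in> cM S" using P by simp
  have PK: "prodM S ?P ?K \<in> cM S" using P by simp
  have FK: "prodM S F ?K \<in> cM S" using F by simp
  have D: "openin (mtop ?A) ?D" by (rule dom1_open[OF P V])
  have IH: "\<And>W. openin (mtop ?P) W \<Longrightarrow> Ck S k ?P W F (mmap S F)" using Suc.IH F by blast
  have C0m: "mmap S F \<in> cC0 S ?P V F"
    using C0_restrict[OF P F carrier_open[OF P] V open_sub[OF P V] C0_msm[OF F]]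
    by (simp add: mmap_def[abs_def])
  have z: "Ck S k ?A ?D ?A (\<lambda>z. z)" by (rule Ck_id[OF A D])
  have pZ: "Ck S k ?A ?D ?P (\<lambda>Z. pfst S Z)" using Ck_pfst'[OF A P PK D] z unfolding amb1_def by simp
  have sZ: "Ck S k ?A ?D (prodM S ?P ?K) (\<lambda>Z. psnd S Z)" using Ck_psnd'[OF A P PK D] z unfolding amb1_def by simp
  have a: "Ck S k ?A ?D ?K (\<lambda>Z. pfst S (pfst S Z))" by (rule Ck_pfst'[OF A K_in F D pZ])
  have y: "Ck S k ?A ?D F (\<lambda>Z. psnd S (pfst S Z))" by (rule Ck_psnd'[OF A K_in F D pZ])
  have w: "Ck S k ?A ?D ?P (\<lambda>Z. pfst S (psnd S Z))" by (rule Ck_pfst'[OF A P K_in D sZ])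
  have b: "Ck S k ?A ?D ?K (\<lambda>Z. pfst S (pfst S (psnd S Z)))" by (rule Ck_pfst'[OF A K_in F D w])
  have et: "Ck S k ?A ?D F (\<lambda>Z. psnd S (pfst S (psnd S Z)))" by (rule Ck_psnd'[OF A K_in F D w])
  have sK: "Ck S k ?A ?D ?K (\<lambda>Z. psnd S (psnd S Z))" by (rule Ck_psnd'[OF A P K_in D sZ])
  have P1: "Ck S k ?A ?D ?P (\<lambda>Z. pr S (pfst S (pfst S Z)) (psnd S (pfst S (psnd S Z))))"
    by (rule Ck_pair[OF A K_in F D a et])
  have m1: "Ck S k ?A ?D F (\<lambda>Z. mmap S F (pr S (pfst S (pfst S Z)) (psnd S (pfst S (psnd S Z)))))"
    by (rule Ck_chainc[OF A P F D P1 IH[OF carrier_open[OF P]]])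
  have Q0: "Ck S k ?A ?D (prodM S F ?K) (\<lambda>Z. pr S (psnd S (pfst S (psnd S Z))) (psnd S (psnd S Z)))"
    by (rule Ck_pair[OF A F K_in D et sK])
  have Q: "Ck S k ?A ?D (amb1 S F) (\<lambda>Z. pr S (psnd S (pfst S Z)) (pr S (psnd S (pfst S (psnd S Z))) (psnd S (psnd S Z))))"
    unfolding amb1_def[of S F] by (rule Ck_pair[OF A F FK D y Q0])
  have am: "Ck S k ?A ?D F (\<lambda>Z. Amap S F (pr S (psnd S (pfst S Z)) (pr S (psnd S (pfst S (psnd S Z))) (psnd S (psnd S Z)))))"
    by (rule Ck_chainc[OF A amb1_in[OF F] F D Q Ck_Amap[OF F IH carrier_open[OF amb1_in[OF F]]]])
  have P2: "Ck S k ?A ?D ?P (\<lambda>Z. pr S (pfst S (pfst S (psnd S Z))) (Amap S F (pr S (psnd S (pfst S Z)) (pr S (psnd S (pfst S (psnd S Z))) (psnd S (psnd S Z))))))"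
    by (rule Ck_pair[OF A K_in F D b am])
  have m2: "Ck S k ?A ?D F (\<lambda>Z. mmap S F (pr S (pfst S (pfst S (psnd S Z))) (Amap S F (pr S (psnd S (pfst S Z)) (pr S (psnd S (pfst S (psnd S Z))) (psnd S (psnd S Z)))))))"
    by (rule Ck_chainc[OF A P F D P2 IH[OF carrier_open[OF P]]])
  have pm: "Ck S k ?A ?D (prodM S F F) (\<lambda>Z. pr S (mmap S F (pr S (pfst S (pfst S Z)) (psnd S (pfst S (psnd S Z)))))
      (mmap S F (pr S (pfst S (pfst S (psnd S Z))) (Amap S F (pr S (psnd S (pfst S Z)) (pr S (psnd S (pfst S (psnd S Z))) (psnd S (psnd S Z))))))))"
    by (rule Ck_pair[OF A F F D m1 m2])
  define h where "h = (\<lambda>Z. addm S F (pr S (mmap S F (pr S (pfst S (pfst S Z)) (psnd S (pfst S (psnd S Z)))))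
      (mmap S F (pr S (pfst S (pfst S (psnd S Z))) (Amap S F (pr S (psnd S (pfst S Z)) (pr S (psnd S (pfst S (psnd S Z))) (psnd S (psnd S Z)))))))))"
  have hk: "Ck S k ?A ?D F h" unfolding h_def
    by (rule Ck_chainc[OF A prodM_in[OF F F] F D pm Ck_addm[OF F carrier_open[OF prodM_in[OF F F]]]])
  have dq: "is_dq S ?P V F (mmap S F) h"
    unfolding is_dq_def
  proof (intro conjI allI impI)
    show "h \<in> cC0 S ?A ?D F" using Ck_C0[OF hk] .
  next
    fix x v s assume xv: "x \<in> V \<and> v \<in> mcarrier ?P \<and> madd ?P x (msmult ?P s v) \<in> V"
    hence "x \<in> mcarrier ?P" using open_sub[OF P V] by auto
    then obtain \<alpha> y where x: "x = pr S (emb S \<alpha>) y" "y \<in> mcarrier F" by (auto elim!: prodM_carrierE simp: K_carrier)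
    obtain \<beta> \<eta> where v: "v = pr S (emb S \<beta>) \<eta>" "\<eta> \<in> mcarrier F" using xv by (auto elim!: prodM_carrierE simp: K_carrier)
    have e: "msmult F (\<alpha> + s * \<beta>) (madd F y (msmult F s \<eta>)) = madd F (msmult F \<alpha> y) (msmult F s (madd F (msmult F \<alpha> \<eta>) (msmult F \<beta> (madd F y (msmult F s \<eta>)))))"
      by (rule Fm.alg_m[OF x(2) v(2)])
    show "mdiff F (mmap S F (madd ?P x (msmult ?P s v))) (mmap S F x) = msmult F s (h (pr S x (pr S v (emb S s))))"
      unfolding h_def using x v e Fm.mdiff_add by (simp add: mmap_def addm_def Amap_def)
  qed
  show ?case using C0m dq hk by auto
qed

lemma Ck_inv: "openin (mtop (cK S)) V \<Longrightarrow> V \<subseteq> Kunits S \<Longrightarrow> Ck S k (cK S) V (cK S) (invm S)"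
proof (induction k arbitrary: V)
  case 0 thus ?case
    using C0_restrict[OF K_in K_in Kunits_open 0(1) 0(2) C0_inv] by (simp add: invm_def[abs_def])
next
  case (Suc k)
  note V = Suc.prems(1) and VU = Suc.prems(2)
  let ?K = "cK S"
  let ?A = "amb1 S ?K" and ?D = "dom1 S ?K V"
  have A: "?A \<in> cM S" by simp
  have KK: "prodM S ?K ?K \<in> cM S" by simp
  have D: "openin (mtop ?A) ?D" by (rule dom1_open[OF K_in V])
  have C0i: "invm S \<in> cC0 S ?K V ?K"
    using C0_restrict[OF K_in K_in Kunits_open V VU C0_inv] by (simp add: invm_def[abs_def])
  have mK: "\<And>W. openin (mtop (prodM S ?K ?K)) W \<Longrightarrow> Ck S k (prodM S ?K ?K) W ?K (mmap S ?K)"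
    using Ck_mmap by simp
  have z: "Ck S k ?A ?D ?A (\<lambda>z. z)" by (rule Ck_id[OF A D])
  have pZ: "Ck S k ?A ?D ?K (\<lambda>Z. pfst S Z)" using Ck_pfst'[OF A K_in KK D] z unfolding amb1_def by simp
  have sZ: "Ck S k ?A ?D (prodM S ?K ?K) (\<lambda>Z. psnd S Z)" using Ck_psnd'[OF A K_in KK D] z unfolding amb1_def by simp
  have pi: "Ck S k ?A ?D ?K (\<lambda>Z. pfst S (psnd S Z))" by (rule Ck_pfst'[OF A K_in K_in D sZ])
  have ng: "Ck S k ?A ?D ?K (\<lambda>Z. msmult ?K (-1) (pfst S (psnd S Z)))"
    by (rule Ck_chainc[OF A K_in K_in D pi Ck_neg[OF K_in carrier_open[OF K_in]]])
  have i1: "Ck S k ?A ?D ?K (\<lambda>Z. invm S (pfst S Z))"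
    by (rule Ck_chain[OF A K_in K_in D V pZ Suc.IH[OF V VU]]) (auto elim!: dom1E)
  have am: "Ck S k ?A ?D ?K (Amap S ?K)"
    by (rule Ck_Amap[OF K_in mK D])
  have i2: "Ck S k ?A ?D ?K (\<lambda>Z. invm S (Amap S ?K Z))"
    by (rule Ck_chain[OF A K_in K_in D V am Suc.IH[OF V VU]]) (auto elim!: dom1E)
  have q1: "Ck S k ?A ?D (prodM S ?K ?K) (\<lambda>Z. pr S (invm S (Amap S ?K Z)) (msmult ?K (-1) (pfst S (psnd S Z))))"
    by (rule Ck_pair[OF A K_in K_in D i2 ng])
  have m1: "Ck S k ?A ?D ?K (\<lambda>Z. mmap S ?K (pr S (invm S (Amap S ?K Z)) (msmult ?K (-1) (pfst S (psnd S Z)))))"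
    by (rule Ck_chainc[OF A KK K_in D q1 mK[OF carrier_open[OF KK]]])
  have q2: "Ck S k ?A ?D (prodM S ?K ?K) (\<lambda>Z. pr S (invm S (pfst S Z)) (mmap S ?K (pr S (invm S (Amap S ?K Z)) (msmult ?K (-1) (pfst S (psnd S Z))))))"
    by (rule Ck_pair[OF A K_in K_in D i1 m1])
  define h where "h = (\<lambda>Z. mmap S ?K (pr S (invm S (pfst S Z)) (mmap S ?K (pr S (invm S (Amap S ?K Z)) (msmult ?K (-1) (pfst S (psnd S Z)))))))"
  have hk: "Ck S k ?A ?D ?K h" unfolding h_def
    by (rule Ck_chainc[OF A KK K_in D q2 mK[OF carrier_open[OF KK]]])
  have dq: "is_dq S ?K V ?K (invm S) h"
    unfolding is_dq_def
  proof (intro conjI allI impI)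
    show "h \<in> cC0 S ?A ?D ?K" using Ck_C0[OF hk] .
  next
    fix x v s assume xv: "x \<in> V \<and> v \<in> mcarrier ?K \<and> madd ?K x (msmult ?K s v) \<in> V"
    then obtain \<alpha> \<beta> where x: "x = emb S \<alpha>" and v: "v = emb S \<beta>" using open_sub[OF K_in V] by (auto simp: K_carrier)
    have a0: "\<alpha> \<noteq> 0" using xv VU x by auto
    have a1: "\<alpha> + s * \<beta> \<noteq> 0" using xv VU x v by auto
    have "inverse (\<alpha> + s * \<beta>) - inverse \<alpha> = s * (inverse \<alpha> * (inverse (\<alpha> + s * \<beta>) * (- \<beta>)))"
      using a0 a1 by (simp add: field_simps)
    thus "mdiff ?K (invm S (madd ?K x (msmult ?K s v))) (invm S x) = msmult ?K s (h (pr S x (pr S v (emb S s))))"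
      unfolding h_def using x v by (simp add: invm_def mmap_def Amap_def)
  qed
  show ?case using C0i dq hk by auto
qed

end

definition Qdom :: "('k::field, 'v) c0data \<Rightarrow> ('k, 'v) tmod \<Rightarrow> 'v set \<Rightarrow> 'v set" where
  "Qdom S X V = {z \<in> dom1 S X V. psnd S (psnd S z) \<in> Kunits S}"
definition Qmap :: "('k::field, 'v) c0data \<Rightarrow> ('k, 'v) tmod \<Rightarrow> ('k, 'v) tmod \<Rightarrow> ('v \<Rightarrow> 'v) \<Rightarrow> 'v \<Rightarrow> 'v" where
  "Qmap S X F g z = mmap S F (pr S (invm S (psnd S (psnd S z))) (subm S F (pr S (g (Amap S X z)) (g (pfst S z)))))"

context c0c begin

lemma Qdom_open: assumes X: "X \<in> cM S" and V: "openin (mtop X) V"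
  shows "openin (mtop (amb1 S X)) (Qdom S X V)"
proof -
  have T: "(\<lambda>z. psnd S (psnd S z)) \<in> cC0 S (amb1 S X) (dom1 S X V) (cK S)"
    by (rule C0_restrict[OF amb1_in[OF X] K_in carrier_open[OF amb1_in[OF X]] dom1_open[OF X V] dom1_sub[OF X V] C0_T[OF X]])
  show ?thesis unfolding Qdom_def by (rule C0_preimage[OF amb1_in[OF X] K_in dom1_open[OF X V] T Kunits_open])
qed

lemma Qmap_pr: "Qmap S X F g (pr S x (pr S v (emb S t))) = msmult F (inverse t) (mdiff F (g (madd X x (msmult X t v))) (g x))"
  by (simp add: Qmap_def mmap_def invm_def subm_def mdiff_def)

lemma Ck_Q: assumes X: "X \<in> cM S" and F: "F \<in> cM S" and V: "openin (mtop X) V" and g: "Ck S k X V F g"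
  shows "Ck S k (amb1 S X) (Qdom S X V) F (Qmap S X F g)"
proof -
  let ?K = "cK S" let ?A = "amb1 S X" and ?D = "Qdom S X V"
  have A: "?A \<in> cM S" using X by simp
  have XK: "prodM S X ?K \<in> cM S" using X by simp
  have D: "openin (mtop ?A) ?D" by (rule Qdom_open[OF X V])
  have Dd: "\<And>z. z \<in> ?D \<Longrightarrow> z \<in> dom1 S X V" unfolding Qdom_def by auto
  have z: "Ck S k ?A ?D ?A (\<lambda>z. z)" by (rule Ck_id[OF A D])
  have pZ: "Ck S k ?A ?D X (\<lambda>Z. pfst S Z)" using Ck_pfst'[OF A X XK D] z unfolding amb1_def by simp
  have sZ: "Ck S k ?A ?D (prodM S X ?K) (\<lambda>Z. psnd S Z)" using Ck_psnd'[OF A X XK D] z unfolding amb1_def by simp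
  have T: "Ck S k ?A ?D ?K (\<lambda>Z. psnd S (psnd S Z))" by (rule Ck_psnd'[OF A X K_in D sZ])
  have iT: "Ck S k ?A ?D ?K (\<lambda>Z. invm S (psnd S (psnd S Z)))"
    by (rule Ck_chain[OF A K_in K_in D Kunits_open T Ck_inv[OF Kunits_open order_refl]]) (auto simp: Qdom_def)
  have am: "Ck S k ?A ?D X (Amap S X)"
    by (rule Ck_Amap[OF X _ D]) (rule Ck_mmap[OF X])
  have ga: "Ck S k ?A ?D F (\<lambda>Z. g (Amap S X Z))"
    by (rule Ck_chain[OF A X F D V am g]) (auto dest!: Dd elim!: dom1E)
  have gp: "Ck S k ?A ?D F (\<lambda>Z. g (pfst S Z))"
    by (rule Ck_chain[OF A X F D V pZ g]) (auto dest!: Dd elim!: dom1E)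
  have q1: "Ck S k ?A ?D (prodM S F F) (\<lambda>Z. pr S (g (Amap S X Z)) (g (pfst S Z)))"
    by (rule Ck_pair[OF A F F D ga gp])
  have sb: "Ck S k ?A ?D F (\<lambda>Z. subm S F (pr S (g (Amap S X Z)) (g (pfst S Z))))"
    by (rule Ck_chainc[OF A prodM_in[OF F F] F D q1 Ck_subm[OF F carrier_open[OF prodM_in[OF F F]]]])
  have q2: "Ck S k ?A ?D (prodM S ?K F) (\<lambda>Z. pr S (invm S (psnd S (psnd S Z))) (subm S F (pr S (g (Amap S X Z)) (g (pfst S Z)))))"
    by (rule Ck_pair[OF A K_in F D iT sb])
  have "Ck S k ?A ?D F (\<lambda>Z. mmap S F (pr S (invm S (psnd S (psnd S Z))) (subm S F (pr S (g (Amap S X Z)) (g (pfst S Z))))))"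
    by (rule Ck_chainc[OF A prodM_in[OF K_in F] F D q2 Ck_mmap[OF F carrier_open[OF prodM_in[OF K_in F]]]])
  thus ?thesis by (simp add: Qmap_def[abs_def])
qed


lemma Ck_glue: "X \<in> cM S \<Longrightarrow> F \<in> cM S \<Longrightarrow> openin (mtop X) V \<Longrightarrow>
  (\<And>W. W \<in> \<U> \<Longrightarrow> openin (mtop X) W \<and> Ck S k X W F g) \<Longrightarrow> \<Union>\<U> = V \<Longrightarrow> Ck S k X V F g"
proof (induction k arbitrary: X V g \<U>)
  case 0 thus ?case using C0_glue[OF 0(1,2,3) 0(5)] by simp
next
  case (Suc k)
  note X = Suc.prems(1) and F = Suc.prems(2) and V = Suc.prems(3) and cov = Suc.prems(4) and un = Suc.prems(5)
  interpret Xm: tm X using tmodM[OF X] by (rule tm.intro)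
  interpret Fm: tm F using tmodM[OF F] by (rule tm.intro)
  let ?A = "amb1 S X"
  have A: "?A \<in> cM S" using X by simp
  have WV: "\<And>W. W \<in> \<U> \<Longrightarrow> W \<subseteq> V" using un by blast
  have gk: "Ck S k X V F g" by (rule Suc.IH[OF X F V _ un]) (use cov Ck_mono in blast)
  have gc: "\<And>x. x \<in> V \<Longrightarrow> g x \<in> mcarrier F" using Ck_img[OF X F V gk] by blast
  define hW where "hW W = (SOME h. is_dq S X W F g h \<and> Ck S k ?A (dom1 S X W) F h)" for W
  have hW: "is_dq S X W F g (hW W) \<and> Ck S k ?A (dom1 S X W) F (hW W)" if W: "W \<in> \<U>" for W
  proof -
    have "\<exists>h. is_dq S X W F g h \<and> Ck S k ?A (dom1 S X W) F h" using cov[OF W] by auto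
    thus ?thesis unfolding hW_def by (rule someI_ex)
  qed
  define H where "H z = (if \<exists>W\<in>\<U>. z \<in> dom1 S X W then hW (SOME W. W \<in> \<U> \<and> z \<in> dom1 S X W) z else Qmap S X F g z)" for z
  have Ha: "H z = hW W z" if W: "W \<in> \<U>" and z: "z \<in> dom1 S X W" for W z
  proof -
    define W' where "W' = (SOME W. W \<in> \<U> \<and> z \<in> dom1 S X W)"
    have W': "W' \<in> \<U> \<and> z \<in> dom1 S X W'" unfolding W'_def by (rule someI[of _ W]) (use W z in blast)
    have Hz: "H z = hW W' z" unfolding H_def W'_def using W z by auto
    have o: "openin (mtop X) (W \<inter> W')" using cov[OF W] cov[of W'] W' by auto
    have d1: "is_dq S X (W \<inter> W') F g (hW W)"
      by (rule is_dq_restrict[OF X F _ o _ conjunct1[OF hW[OF W]]]) (use cov[OF W] in auto)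
    have d2: "is_dq S X (W \<inter> W') F g (hW W')"
      by (rule is_dq_restrict[OF X F _ o _ conjunct1[OF hW[of W']]]) (use cov[of W'] W' in auto)
    have "z \<in> dom1 S X (W \<inter> W')" using z W' dom1_Int by blast
    thus ?thesis using dq_unique[OF X F o d2 d1] Hz by simp
  qed
  have Hb: "H z = Qmap S X F g z" if z: "z \<in> Qdom S X V" for z
  proof (cases "\<exists>W\<in>\<U>. z \<in> dom1 S X W")
    case False thus ?thesis unfolding H_def by auto
  next
    case True
    then obtain W where W: "W \<in> \<U>" "z \<in> dom1 S X W" by blast
    then obtain x v t where zz: "z = pr S x (pr S v (emb S t))" and a: "x \<in> W" "v \<in> mcarrier X" "madd X x (msmult X t v) \<in> W"
      by (auto elim!: dom1E)
    have t: "t \<noteq> 0" using z zz unfolding Qdom_def by simp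
    have hc: "hW W z \<in> mcarrier F"
      by (rule Ck_img[OF A F dom1_open[OF X] conjunct2[OF hW[OF W(1)]] W(2)]) (use cov[OF W(1)] in blast)
    have e: "mdiff F (g (madd X x (msmult X t v))) (g x) = msmult F t (hW W z)"
      using is_dqD[OF conjunct1[OF hW[OF W(1)]] a] zz by simp
    show ?thesis using Ha[OF W] zz e Qmap_pr Fm.sminv[OF t hc] by simp
  qed
  have cover: "\<Union>(dom1 S X ` \<U> \<union> {Qdom S X V}) = dom1 S X V"
  proof (intro equalityI subsetI)
    fix z assume "z \<in> \<Union>(dom1 S X ` \<U> \<union> {Qdom S X V})"
    thus "z \<in> dom1 S X V" using dom1_mono[OF WV] unfolding Qdom_def by blast
  next
    fix z assume z: "z \<in> dom1 S X V"
    then obtain x v t where zz: "z = pr S x (pr S v (emb S t))" and a: "x \<in> V" "v \<in> mcarrier X" "madd X x (msmult X t v) \<in> V"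
      by (auto elim!: dom1E)
    show "z \<in> \<Union>(dom1 S X ` \<U> \<union> {Qdom S X V})"
    proof (cases "t = 0")
      case True
      obtain W where W: "W \<in> \<U>" "x \<in> W" using a(1) un by blast
      have "x \<in> mcarrier X" using a(1) open_sub[OF X V] by auto
      hence "z \<in> dom1 S X W" using zz W a True by simp
      thus ?thesis using W by blast
    next
      case False thus ?thesis using z zz unfolding Qdom_def by simp
    qed
  qed
  have Hk: "Ck S k ?A (dom1 S X V) F H"
  proof (rule Suc.IH[OF A F dom1_open[OF X V] _ cover])
    fix D assume "D \<in> dom1 S X ` \<U> \<union> {Qdom S X V}"
    then consider (a) W where "W \<in> \<U>" "D = dom1 S X W" | (b) "D = Qdom S X V" by blast
    thus "openin (mtop ?A) D \<and> Ck S k ?A D F H"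
    proof cases
      case a
      have o: "openin (mtop ?A) D" using dom1_open[OF X] cov[OF a(1)] a(2) by blast
      have "Ck S k ?A D F H"
        by (rule Ck_cong[OF A F o, of k "hW W"]) (use hW[OF a(1)] Ha[OF a(1)] a(2) in auto)
      thus ?thesis using o by blast
    next
      case b
      have o: "openin (mtop ?A) D" using Qdom_open[OF X V] b by simp
      have "Ck S k ?A D F H"
        by (rule Ck_cong[OF A F o Ck_Q[OF X F V gk, folded b]]) (use Hb b in auto)
      thus ?thesis using o by blast
    qed
  qed
  have dq: "is_dq S X V F g H"
    unfolding is_dq_def
  proof (intro conjI allI impI)
    show "H \<in> cC0 S ?A (dom1 S X V) F" using Ck_C0[OF Hk] .
  next
    fix x v t assume "x \<in> V \<and> v \<in> mcarrier X \<and> madd X x (msmult X t v) \<in> V"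
    hence a: "x \<in> V" "v \<in> mcarrier X" "madd X x (msmult X t v) \<in> V" by auto
    let ?z = "pr S x (pr S v (emb S t))"
    show "mdiff F (g (madd X x (msmult X t v))) (g x) = msmult F t (H ?z)"
    proof (cases "\<exists>W\<in>\<U>. ?z \<in> dom1 S X W")
      case True
      then obtain W where W: "W \<in> \<U>" "?z \<in> dom1 S X W" by blast
      show ?thesis using Ha[OF W] is_dqD[OF conjunct1[OF hW[OF W(1)]]] W(2) by simp
    next
      case False
      have t: "t \<noteq> 0"
      proof
        assume t0: "t = 0"
        obtain W where W: "W \<in> \<U>" "x \<in> W" using a(1) un by blast
        have "x \<in> mcarrier X" using a(1) open_sub[OF X V] by auto
        hence "?z \<in> dom1 S X W" using W a t0 by simp
        thus False using False W by blast
      qed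
      have "?z \<in> Qdom S X V" unfolding Qdom_def using a t by simp
      hence "H ?z = msmult F (inverse t) (mdiff F (g (madd X x (msmult X t v))) (g x))" using Hb Qmap_pr by simp
      thus ?thesis using Fm.sminv2[OF t] gc a Fm.mdiff_C by simp
    qed
  qed
  show ?case using Ck_C0[OF gk] dq Hk by auto
qed


end

definition stp :: "('k::field, 'v) c0data \<Rightarrow> ('k, 'v) tmod \<Rightarrow> ('k, 'v) tmod \<times> 'v set \<times> ('v \<Rightarrow> 'v) \<Rightarrow> ('k, 'v) tmod \<times> 'v set \<times> ('v \<Rightarrow> 'v)" where
  "stp S F p = (case p of (X, V, g) \<Rightarrow> (amb1 S X, dom1 S X V, dq S X V F g))"

context c0c begin

lemma diter_Suc_stp: "diter S F (Suc n) p = stp S F (diter S F n p)"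
  unfolding stp_def by (rule diter.simps(2))

lemma diter_Suc': "diter S F (Suc n) p = diter S F n (stp S F p)"
proof (induction n arbitrary: p)
  case 0 thus ?case by (simp only: diter_Suc_stp diter.simps(1))
next
  case (Suc n) thus ?case by (metis diter_Suc_stp)
qed

lemma isCk_Suc: "isCk S (Suc n) X V F g \<longleftrightarrow> isC1 S X V F g \<and> isCk S n (amb1 S X) (dom1 S X V) F (dq S X V F g)"
proof (induction n arbitrary: X V g)
  case 0
  have c: "dq S X V F g \<in> cC0 S (amb1 S X) (dom1 S X V) F" if c1: "isC1 S X V F g"
  proof -
    obtain h where "is_dq S X V F g h" using c1 unfolding isC1_def by blast
    hence "is_dq S X V F g (dq S X V F g)" unfolding dq_def by (metis someI)
    thus ?thesis by (rule is_dq_C0)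
  qed
  have e: "isCk S (Suc 0) X V F g \<longleftrightarrow> g \<in> cC0 S X V F \<and> isC1 S X V F g" by simp
  have "isC1 S X V F g \<Longrightarrow> g \<in> cC0 S X V F" unfolding isC1_def by simp
  thus ?case using c e by auto
next
  case (Suc n)
  have st: "stp S F (X, V, g) = (amb1 S X, dom1 S X V, dq S X V F g)" by (simp add: stp_def)
  have "isCk S (Suc (Suc n)) X V F g \<longleftrightarrow> isCk S (Suc n) X V F g \<and>
     (case diter S F (Suc n) (X, V, g) of (X', V', g') \<Rightarrow> isC1 S X' V' F g')" by (simp only: isCk.simps(2))
  also have "\<dots> \<longleftrightarrow> (isC1 S X V F g \<and> isCk S n (amb1 S X) (dom1 S X V) F (dq S X V F g)) \<and>
     (case diter S F n (amb1 S X, dom1 S X V, dq S X V F g) of (X', V', g') \<Rightarrow> isC1 S X' V' F g')"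
    by (simp only: Suc.IH diter_Suc' st)
  also have "\<dots> \<longleftrightarrow> isC1 S X V F g \<and> isCk S (Suc n) (amb1 S X) (dom1 S X V) F (dq S X V F g)"
    by (simp only: isCk.simps(2) conj_assoc)
  finally show ?case .
qed

lemma isCk_Ck: "X \<in> cM S \<Longrightarrow> F \<in> cM S \<Longrightarrow> openin (mtop X) V \<Longrightarrow> isCk S n X V F g \<longleftrightarrow> Ck S n X V F g"
proof (induction n arbitrary: X V g)
  case 0 thus ?case by simp
next
  case (Suc n)
  note X = Suc.prems(1) and F = Suc.prems(2) and V = Suc.prems(3)
  have IH: "isCk S n (amb1 S X) (dom1 S X V) F (dq S X V F g) \<longleftrightarrow> Ck S n (amb1 S X) (dom1 S X V) F (dq S X V F g)"
    by (rule Suc.IH[OF amb1_in[OF X] F dom1_open[OF X V]])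
  have sdq: "is_dq S X V F g h \<Longrightarrow> is_dq S X V F g (dq S X V F g)" for h
    unfolding dq_def by (metis someI)
  show ?case
  proof
    assume "isCk S (Suc n) X V F g"
    hence a: "isC1 S X V F g" "Ck S n (amb1 S X) (dom1 S X V) F (dq S X V F g)" using isCk_Suc IH by auto
    thus "Ck S (Suc n) X V F g" unfolding isC1_def using sdq by auto
  next
    assume "Ck S (Suc n) X V F g"
    then obtain h where g: "g \<in> cC0 S X V F" "is_dq S X V F g h" "Ck S n (amb1 S X) (dom1 S X V) F h" by auto
    have c1: "isC1 S X V F g" unfolding isC1_def using g by auto
    have "Ck S n (amb1 S X) (dom1 S X V) F (dq S X V F g)"
      by (rule Ck_cong[OF amb1_in[OF X] F dom1_open[OF X V] g(3)]) (rule dq_unique[OF X F V g(2) sdq[OF g(2)]])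
    thus "isCk S (Suc n) X V F g" using isCk_Suc IH c1 by auto
  qed
qed

end

theorem lemma4p9:
  fixes S :: "('k::field, 'v) c0data"
    and E F :: "('k, 'v) tmod" and U :: "'v set" and f :: "'v \<Rightarrow> 'v"
    and k :: enat and I :: "'i set" and Ui :: "'i \<Rightarrow> 'v set"
  assumes "C0_concept S"
    and "E \<in> cM S" and "F \<in> cM S"
    and "openin (mtop E) U"
    and "f ` U \<subseteq> mcarrier F"
    and "\<forall>i\<in>I. openin (mtop E) (Ui i) \<and> Ui i \<subseteq> U"
    and "(\<Union>i\<in>I. Ui i) = U"
    and "\<forall>i\<in>I. isCk_enat S k E (Ui i) F f"
  shows "isCk_enat S k E U F f"
proof -
  interpret c0c S by (rule c0c.intro) (rule assms(1))
  have main: "isCk S n E U F f" if h: "\<And>i. i \<in> I \<Longrightarrow> isCk S n E (Ui i) F f" for n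
  proof -
    have "Ck S n E U F f"
    proof (rule Ck_glue[OF assms(2,3,4) _ assms(7)])
      fix W assume "W \<in> Ui ` I"
      then obtain i where i: "i \<in> I" "W = Ui i" by blast
      have o: "openin (mtop E) W" using assms(6) i by blast
      thus "openin (mtop E) W \<and> Ck S n E W F f" using isCk_Ck[OF assms(2,3) o] h[OF i(1)] i(2) by blast
    qed
    thus ?thesis using isCk_Ck[OF assms(2,3,4)] by blast
  qed
  show ?thesis
  proof (cases k)
    case (enat n)
    thus ?thesis using main[of n] assms(8) unfolding isCk_enat_def by auto
  next
    case infinity
    thus ?thesis using main assms(8) unfolding isCk_enat_def by auto
  qed
qed

end
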